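(* Let $d\ge 1$, let $x_1<x_2$ be real numbers and $x_0\in[x_1,x_2]$. Let $p,q,r_1,\dots,r_d$ be continuous complex-valued functions on $[x_1,x_2]$, with $p$ continuously differentiable and $p(x)\neq 0$ for all $x$, and let $Ly=(py')'+qy$. Let $u_0$ be a nonvanishing solution of $Lu_0=0$ on $[x_1,x_2]$, and let $\tilde X^{(\mathbf j)}$, $X^{(\mathbf m+\frac1d\mathbf 1)}$ be the formal powers defined in the context. For $\vec\lambda=(\lambda_1,\dots,\lambda_d)\in\mathbb C^d$ define $$u_1=u_0\sum_{\mathbf n\in\mathbb Z_{\ge0}^d}\frac{1}{(2|\mathbf n|)!}\tilde X^{(2\mathbf n)}\lambda^{\mathbf n},\qquad u_2=u_0\sum_{\mathbf n\in\mathbb Z_{\ge0}^d}\frac{1}{(2|\mathbf n|+1)!}X^{(2\mathbf n+\frac1d\mathbf 1)}\lambda^{\mathbf n}.$$ Then for every $\vec\lambda\in\mathbb C^d$ both series converge uniformly on $[x_1,x_2]$, and $u_1,u_2$ are linearly independent solutions of $$(py')'+qy=(\lambda_1r_1+\cdots+\lambda_dr_d)\,y .$$ Moreover their derivatives are given by the uniformly convergent series $$u_1'=\frac{u_0'}{u_0}u_1+\frac{1}{pu_0}\sum_{\mathbf n\in\mathbb Z_{\ge0}^d,\ \mathbf n\neq 0}\frac{1}{(2|\mathbf n|-1)!}\sum_{i=1}^d\tilde X^{(2\mathbf n-\delta_i)}\lambda^{\mathbf n},$$ $$u_2'=\frac{u_0'}{u_0}u_2+\frac{1}{pu_0}\sum_{\mathbf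 n\in\mathbb Z_{\ge0}^d}\frac{1}{(2|\mathbf n|)!}\sum_{i=1}^dX^{(2\mathbf n-\delta_i+\frac1d\mathbf 1)}\lambda^{\mathbf n},$$ and for every $\vec\lambda$ the initial values are $u_1(x_0)=u_0(x_0)$, $u_1'(x_0)=u_0'(x_0)$, $u_2(x_0)=0$, $u_2'(x_0)=\dfrac{1}{p(x_0)u_0(x_0)}$.
   Context: Notation: for a function $f$ on $[x_1,x_2]$, $\int f$ denotes the function $x\mapsto\int_{x_0}^x f(s)\,ds$. For $\mathbf j=(j_1,\dots,j_d)$, $|\mathbf j|=j_1+\cdots+j_d$; $\delta_i$ is the $i$-th standard basis vector; $\mathbf 1=(1,\dots,1)$; $\lambda^{\mathbf n}=\lambda_1^{n_1}\cdots\lambda_d^{n_d}$. Formal powers $\tilde X$: indexed by $\mathbf j\in\mathbb Z^d$. Call $\mathbf j$ admissible if at most one entry $j_i$ is odd; it is even/odd according to the parity of $|\mathbf j|$ (odd admissible means exactly one $j_i$ is odd). Set $\tilde X^{(\mathbf 0)}\equiv1$ and $\tilde X^{(\mathbf j)}\equiv0$ if some $j_i<0$. For admissible $\mathbf j\ge 0$, $\mathbf j\ne\mathbf 0$: if $|\mathbf j|$ is odd and $j_i$ is its odd entry, $\tilde X^{(\mathbf j)}=|\mathbf j|\int r_iu_0^2\,\tilde X^{(\mathbf j-\delta_i)}$; if $|\mathbf j|$ is even, $\tilde X^{(\mathbf j)}=|\mathbf j|\int\frac{1}{pu_0^2}\sum_{i=1}^d\tilde X^{(\mathbf j-\delta_i)}$.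 Formal powers $X$: indexed by $\mathbf j=\mathbf m+\frac1d\mathbf 1$ with $\mathbf m\in\mathbb Z^d$, so $|\mathbf j|=|\mathbf m|+1$. Call $\mathbf j$ admissible if at most one $m_i$ is odd; its parity is that of $|\mathbf j|$. Set $X^{(\frac1d\mathbf 1-\delta_i)}\equiv\frac1d$ for $i=1,\dots,d$, and $X^{(\mathbf m+\frac1d\mathbf 1)}\equiv0$ whenever some $m_i<0$ and $\mathbf m$ is not one of $-\delta_1,\dots,-\delta_d$. For admissible $\mathbf j=\mathbf m+\frac1d\mathbf 1$ with $\mathbf m\ge0$: if $|\mathbf j|$ is even (so exactly one $m_i$ is odd), $X^{(\mathbf j)}=|\mathbf j|\int r_iu_0^2\,X^{(\mathbf j-\delta_i)}$ with that index $i$; if $|\mathbf j|$ is odd, $X^{(\mathbf j)}=|\mathbf j|\int\frac{1}{pu_0^2}\sum_{i=1}^dX^{(\mathbf j-\delta_i)}$. *)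

theory Defs
  imports "HOL-Analysis.Analysis"
begin

definition oint :: "real \<Rightarrow> real \<Rightarrow> (real \<Rightarrow> complex) \<Rightarrow> complex" where
  "oint a b f = (if a \<le> b then integral {a..b} f else - integral {b..a} f)"

(* Multi-indices in Z_{\<ge>0}^d are lists of naturals of length d. *)
definition admissible :: "nat list \<Rightarrow> bool" where
  "admissible j \<longleftrightarrow> card {i. i < length j \<and> odd (j ! i)} \<le> 1"

definition odd_idx :: "nat list \<Rightarrow> nat" where
  "odd_idx j = (THE i. i < length j \<and> odd (j ! i))"

(* j - \<delta>_i (only used when j!i > 0) *)
definition dec :: "nat list \<Rightarrow> nat \<Rightarrow> nat list" where
  "dec j i = j[i := j ! i - 1]"

definition dbl :: "nat list \<Rightarrow> nat list" where
  "dbl n = map (\<lambda>k. 2 * k) n"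

definition lampow :: "(nat \<Rightarrow> complex) \<Rightarrow> nat list \<Rightarrow> complex" where
  "lampow lam n = (\<Prod>i<length n. lam i ^ (n ! i))"

(* Formal powers \<tilde>X^{(j)}, computed by level n = |j|;
   entries with a negative component are 0; non-admissible indices (never used) are set to 0. *)
primrec XtL :: "real \<Rightarrow> (real \<Rightarrow> complex) \<Rightarrow> (nat \<Rightarrow> real \<Rightarrow> complex) \<Rightarrow> (real \<Rightarrow> complex)
    \<Rightarrow> nat \<Rightarrow> nat list \<Rightarrow> real \<Rightarrow> complex" where
  "XtL x0 p r u0 0 j = (\<lambda>x. 1)"
| "XtL x0 p r u0 (Suc n) j =
    (if admissible j then
       (if odd (Suc n) then
          (let i = odd_idx j in
            (\<lambda>x. of_nat (Suc n) * oint x0 x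
               (\<lambda>s. r i s * (u0 s)^2 * (if 0 < j ! i then XtL x0 p r u0 n (dec j i) s else 0))))
        else
          (\<lambda>x. of_nat (Suc n) * oint x0 x
             (\<lambda>s. (\<Sum>i<length j. if 0 < j ! i then XtL x0 p r u0 n (dec j i) s else 0)
                    / (p s * (u0 s)^2))))
     else (\<lambda>x. 0))"

definition Xt :: "real \<Rightarrow> (real \<Rightarrow> complex) \<Rightarrow> (nat \<Rightarrow> real \<Rightarrow> complex) \<Rightarrow> (real \<Rightarrow> complex)
    \<Rightarrow> nat list \<Rightarrow> real \<Rightarrow> complex" where
  "Xt x0 p r u0 j = XtL x0 p r u0 (sum_list j) j"

definition Xt_minus :: "real \<Rightarrow> (real \<Rightarrow> complex) \<Rightarrow> (nat \<Rightarrow> real \<Rightarrow> complex) \<Rightarrow> (real \<Rightarrow> complex)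
    \<Rightarrow> nat list \<Rightarrow> nat \<Rightarrow> real \<Rightarrow> complex" where
  "Xt_minus x0 p r u0 j i = (if 0 < j ! i then Xt x0 p r u0 (dec j i) else (\<lambda>_. 0))"

(* Formal powers X^{(m + 1/d 1)} for m \<ge> 0, computed by level n = |m| (so |j| = n+1).
   Base values X^{(1/d 1 - \<delta>_i)} = 1/d, other indices with a negative entry give 0. *)
primrec XL :: "real \<Rightarrow> (real \<Rightarrow> complex) \<Rightarrow> (nat \<Rightarrow> real \<Rightarrow> complex) \<Rightarrow> (real \<Rightarrow> complex)
    \<Rightarrow> nat \<Rightarrow> nat list \<Rightarrow> real \<Rightarrow> complex" where
  "XL x0 p r u0 0 m =
     (\<lambda>x. oint x0 x (\<lambda>s. (\<Sum>i<length m. 1 / of_nat (length m)) / (p s * (u0 s)^2)))"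
| "XL x0 p r u0 (Suc n) m =
    (if admissible m then
       (if even (Suc n + 1) then
          (let i = odd_idx m in
            (\<lambda>x. of_nat (Suc n + 1) * oint x0 x
               (\<lambda>s. r i s * (u0 s)^2 * (if 0 < m ! i then XL x0 p r u0 n (dec m i) s else 0))))
        else
          (\<lambda>x. of_nat (Suc n + 1) * oint x0 x
             (\<lambda>s. (\<Sum>i<length m. if 0 < m ! i then XL x0 p r u0 n (dec m i) s else 0)
                    / (p s * (u0 s)^2))))
     else (\<lambda>x. 0))"

definition Xf :: "real \<Rightarrow> (real \<Rightarrow> complex) \<Rightarrow> (nat \<Rightarrow> real \<Rightarrow> complex) \<Rightarrow> (real \<Rightarrow> complex)
    \<Rightarrow> nat list \<Rightarrow> real \<Rightarrow> complex" where
  "Xf x0 p r u0 m = XL x0 p r u0 (sum_list m) m"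

definition Xf_minus :: "real \<Rightarrow> (real \<Rightarrow> complex) \<Rightarrow> (nat \<Rightarrow> real \<Rightarrow> complex) \<Rightarrow> (real \<Rightarrow> complex)
    \<Rightarrow> nat list \<Rightarrow> nat \<Rightarrow> real \<Rightarrow> complex" where
  "Xf_minus x0 p r u0 m i =
     (if 0 < m ! i then Xf x0 p r u0 (dec m i)
      else if (\<forall>k<length m. m ! k = 0) then (\<lambda>_. 1 / of_nat (length m))
      else (\<lambda>_. 0))"

(* y solves (p y')' + q y = w y on I, with derivative y' (one-sided at endpoints) *)
definition ode_sol :: "real set \<Rightarrow> (real \<Rightarrow> complex) \<Rightarrow> (real \<Rightarrow> complex) \<Rightarrow> (real \<Rightarrow> complex)
    \<Rightarrow> (real \<Rightarrow> complex) \<Rightarrow> (real \<Rightarrow> complex) \<Rightarrow> bool" where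
  "ode_sol I p q w y y' \<longleftrightarrow>
     (\<forall>x\<in>I. (y has_vector_derivative y' x) (at x within I)) \<and>
     (\<forall>x\<in>I. ((\<lambda>t. p t * y' t) has_vector_derivative ((w x - q x) * y x)) (at x within I))"


definition ta1 :: "real \<Rightarrow> (real \<Rightarrow> complex) \<Rightarrow> (nat \<Rightarrow> real \<Rightarrow> complex) \<Rightarrow> (real \<Rightarrow> complex)
    \<Rightarrow> (nat \<Rightarrow> complex) \<Rightarrow> nat list \<Rightarrow> real \<Rightarrow> complex" where
  "ta1 x0 p r u0 lam n x = Xt x0 p r u0 (dbl n) x * lampow lam n / fact (2 * sum_list n)"

definition ta2 :: "real \<Rightarrow> (real \<Rightarrow> complex) \<Rightarrow> (nat \<Rightarrow> real \<Rightarrow> complex) \<Rightarrow> (real \<Rightarrow> complex)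
    \<Rightarrow> (nat \<Rightarrow> complex) \<Rightarrow> nat list \<Rightarrow> real \<Rightarrow> complex" where
  "ta2 x0 p r u0 lam n x = Xf x0 p r u0 (dbl n) x * lampow lam n / fact (2 * sum_list n + 1)"

definition tb1 :: "real \<Rightarrow> (real \<Rightarrow> complex) \<Rightarrow> (nat \<Rightarrow> real \<Rightarrow> complex) \<Rightarrow> (real \<Rightarrow> complex)
    \<Rightarrow> (nat \<Rightarrow> complex) \<Rightarrow> nat list \<Rightarrow> real \<Rightarrow> complex" where
  "tb1 x0 p r u0 lam n x =
     (\<Sum>i<length n. Xt_minus x0 p r u0 (dbl n) i x) * lampow lam n / fact (2 * sum_list n - 1)"

definition tb2 :: "real \<Rightarrow> (real \<Rightarrow> complex) \<Rightarrow> (nat \<Rightarrow> real \<Rightarrow> complex) \<Rightarrow> (real \<Rightarrow> complex)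
    \<Rightarrow> (nat \<Rightarrow> complex) \<Rightarrow> nat list \<Rightarrow> real \<Rightarrow> complex" where
  "tb2 x0 p r u0 lam n x =
     (\<Sum>i<length n. Xf_minus x0 p r u0 (dbl n) i x) * lampow lam n / fact (2 * sum_list n)"

end

theory Submission
  imports Defs
begin

lemma oint_self[simp]: "oint a a g = 0"
  by (simp add: oint_def)

lemma oint_split:
  fixes g :: "real \<Rightarrow> complex"
  assumes "continuous_on {a..b} g" "x0 \<in> {a..b}" "x \<in> {a..b}"
  shows "oint x0 x g = integral {a..x} g - integral {a..x0} g"
proof (cases "x0 \<le> x")
  case True
  have "integral {a..x0} g + integral {x0..x} g = integral {a..x} g"
    using assms True by (intro Henstock_Kurzweil_Integration.integral_combine integrable_continuous_interval continuous_on_subset[OF assms(1)]) auto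
  then show ?thesis using True by (simp add: oint_def algebra_simps)
next
  case False
  have "integral {a..x} g + integral {x..x0} g = integral {a..x0} g"
    using assms False by (intro Henstock_Kurzweil_Integration.integral_combine integrable_continuous_interval continuous_on_subset[OF assms(1)]) auto
  then show ?thesis using False by (simp add: oint_def algebra_simps)
qed

lemma oint_deriv:
  fixes g :: "real \<Rightarrow> complex"
  assumes "continuous_on {a..b} g" "x0 \<in> {a..b}" "x \<in> {a..b}"
  shows "((\<lambda>x. oint x0 x g) has_vector_derivative g x) (at x within {a..b})"
proof -
  have "((\<lambda>u. integral {a..u} g - integral {a..x0} g) has_vector_derivative g x - 0) (at x within {a..b})"
    by (intro derivative_intros integral_has_vector_derivative assms)
  then have "((\<lambda>u. integral {a..u} g - integral {a..x0} g) has_vector_derivative g x) (at x within {a..b})"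
    by simp
  then show ?thesis
    using has_vector_derivative_transform[of x "{a..b}" "\<lambda>x. oint x0 x g" "\<lambda>u. integral {a..u} g - integral {a..x0} g"] assms oint_split[OF assms(1,2)] by blast
qed

lemma deriv_cont:
  assumes "\<And>x. x \<in> S \<Longrightarrow> (f has_vector_derivative f' x) (at x within S)"
  shows "continuous_on S f"
  using assms continuous_on_eq_continuous_within has_vector_derivative_continuous by blast

lemma oint_cont:
  fixes g :: "real \<Rightarrow> complex"
  assumes "continuous_on {a..b} g" "x0 \<in> {a..b}"
  shows "continuous_on {a..b} (\<lambda>x. oint x0 x g)"
  by (rule deriv_cont, rule oint_deriv[OF assms])

lemma oint_bound:
  fixes g :: "real \<Rightarrow> complex"
  assumes cont: "continuous_on {a..b} g" and x0: "x0 \<in> {a..b}" and x: "x \<in> {a..b}"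
    and bd: "\<And>s. s \<in> {a..b} \<Longrightarrow> norm (g s) \<le> M * \<bar>s - x0\<bar> ^ k"
  shows "norm (oint x0 x g) \<le> M * \<bar>x - x0\<bar> ^ Suc k / Suc k"
proof (cases "x0 \<le> x")
  case True
  have sub: "{x0..x} \<subseteq> {a..b}" using x0 x by auto
  have int: "((\<lambda>s. M * (s - x0)^k) has_integral
      (M*(x-x0)^Suc k/Suc k - M*(x0-x0)^Suc k / Suc k)) {x0..x}"
  proof (rule fundamental_theorem_of_calculus)
    show "x0 \<le> x" by fact
    fix s assume "s \<in> {x0..x}"
    have "((\<lambda>s. M*(s-x0)^Suc k/Suc k) has_real_derivative M*(of_nat (Suc k) * (s-x0)^k * 1)/Suc k) (at s within {x0..x})"
      by (intro derivative_eq_intros) auto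
    then show "((\<lambda>s. M*(s-x0)^Suc k/Suc k) has_vector_derivative M * (s - x0)^k) (at s within {x0..x})"
      by (simp add: has_real_derivative_iff_has_vector_derivative)
  qed
  have b2: "norm (g s) \<le> M * (s - x0)^k" if "s \<in> {x0..x}" for s
    using bd[of s] sub that by auto
  have "norm (integral {x0..x} g) \<le> integral {x0..x} (\<lambda>s. M * (s - x0)^k)"
    using int sub b2 by (intro integral_norm_bound_integral)
      (auto intro!: integrable_continuous_interval continuous_on_subset[OF cont] continuous_intros)
  also have "\<dots> = M*(x-x0)^Suc k/Suc k" using integral_unique[OF int] by simp
  finally show ?thesis using True by (simp add: oint_def)
next
  case False
  have sub: "{x..x0} \<subseteq> {a..b}" using x0 x by auto
  have int: "((\<lambda>s. M * (x0 - s)^k) has_integral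
      ((- M*(x0-x0)^Suc k/Suc k) - (- M*(x0-x)^Suc k / Suc k))) {x..x0}"
  proof (rule fundamental_theorem_of_calculus)
    show "x \<le> x0" using False by simp
    fix s assume "s \<in> {x..x0}"
    have "((\<lambda>s. - M*(x0-s)^Suc k/Suc k) has_real_derivative - M*(of_nat (Suc k) * (x0-s)^k * (0 - 1))/Suc k) (at s within {x..x0})"
      by (intro derivative_eq_intros) auto
    then show "((\<lambda>s. - M*(x0-s)^Suc k/Suc k) has_vector_derivative M * (x0 - s)^k) (at s within {x..x0})"
      by (simp add: has_real_derivative_iff_has_vector_derivative)
  qed
  have b2: "norm (g s) \<le> M * (x0 - s)^k" if "s \<in> {x..x0}" for s
    using bd[of s] sub that by (auto simp: abs_minus_commute)
  have "norm (integral {x..x0} g) \<le> integral {x..x0} (\<lambda>s. M * (x0 - s)^k)"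
    using int sub b2 by (intro integral_norm_bound_integral)
      (auto intro!: integrable_continuous_interval continuous_on_subset[OF cont] continuous_intros)
  also have "\<dots> = M*(x0-x)^Suc k/Suc k" using integral_unique[OF int] by simp
  finally show ?thesis using False by (simp add: oint_def)
qed


lemma summ_cmp:
  fixes f :: "'a \<Rightarrow> complex" and M :: "'a \<Rightarrow> real"
  assumes "M summable_on A" "\<And>n. n \<in> A \<Longrightarrow> norm (f n) \<le> M n"
  shows "f summable_on A"
proof -
  have "(\<lambda>n. norm (f n)) summable_on A"
    by (rule summable_on_comparison_test[OF assms(1)]) (use assms in auto)
  then show ?thesis by (rule abs_summable_summable)
qed

lemma mtest:
  fixes f :: "'a \<Rightarrow> real \<Rightarrow> complex" and M :: "'a \<Rightarrow> real"
  assumes Ms: "M summable_on A" and bd: "\<And>n x. n \<in> A \<Longrightarrow> x \<in> S \<Longrightarrow> norm (f n x) \<le> M n"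
    and M0: "\<And>n. n \<in> A \<Longrightarrow> 0 \<le> M n"
  shows "uniform_limit S (\<lambda>F x. \<Sum>n\<in>F. f n x) (\<lambda>x. \<Sum>\<^sub>\<infinity>n\<in>A. f n x) (finite_subsets_at_top A)"
proof (rule uniform_limitI)
  fix e :: real assume e: "e > 0"
  have fs: "(\<lambda>n. f n x) summable_on A" if "x \<in> S" for x
    by (rule summ_cmp[OF Ms]) (use bd that in auto)
  have "((\<lambda>F. sum M F) \<longlongrightarrow> infsum M A) (finite_subsets_at_top A)"
    by (rule infsum_tendsto[OF Ms])
  then have ev1: "\<forall>\<^sub>F F in finite_subsets_at_top A. dist (sum M F) (infsum M A) < e"
    using e tendstoD by blast
  have ev2: "\<forall>\<^sub>F F in finite_subsets_at_top A. finite F \<and> F \<subseteq> A"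
    by (rule eventually_finite_subsets_at_top_weakI) auto
  show "\<forall>\<^sub>F F in finite_subsets_at_top A. \<forall>x\<in>S. dist (\<Sum>n\<in>F. f n x) (\<Sum>\<^sub>\<infinity>n\<in>A. f n x) < e"
    using ev1 ev2
  proof eventually_elim
    case (elim F)
    show ?case
    proof
      fix x assume x: "x \<in> S"
      have sF: "(\<lambda>n. f n x) summable_on F" using elim by simp
      have "dist (\<Sum>n\<in>F. f n x) (\<Sum>\<^sub>\<infinity>n\<in>A. f n x) = norm ((\<Sum>\<^sub>\<infinity>n\<in>A. f n x) - (\<Sum>\<^sub>\<infinity>n\<in>F. f n x))"
        using elim by (simp add: dist_norm norm_minus_commute)
      also have "\<dots> = norm (\<Sum>\<^sub>\<infinity>n\<in>A-F. f n x)"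
        using infsum_Diff[OF fs[OF x] sF] elim by simp
      also have "\<dots> \<le> (\<Sum>\<^sub>\<infinity>n\<in>A-F. M n)"
      proof (rule norm_infsum_le)
        show "((\<lambda>n. f n x) has_sum (\<Sum>\<^sub>\<infinity>n\<in>A-F. f n x)) (A - F)"
          using summable_on_subset[OF fs[OF x], of "A-F"] by auto
        show "(M has_sum (\<Sum>\<^sub>\<infinity>n\<in>A-F. M n)) (A - F)"
          using summable_on_subset[OF Ms, of "A-F"] by auto
      qed (use bd x in auto)
      also have "\<dots> = infsum M A - sum M F"
        using infsum_Diff[OF Ms, of F] elim by simp
      also have "\<dots> < e"
        using elim by (simp add: dist_real_def)
      finally show "dist (\<Sum>n\<in>F. f n x) (\<Sum>\<^sub>\<infinity>n\<in>A. f n x) < e" .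
    qed
  qed
qed

lemma termwise_deriv:
  fixes f g :: "'a \<Rightarrow> real \<Rightarrow> complex" and a b :: real and Sf G :: "real \<Rightarrow> complex"
  assumes ab: "a \<le> b"
    and gc: "\<And>n. n \<in> A \<Longrightarrow> continuous_on {a..b} (g n)"
    and fd: "\<And>n x. n \<in> A \<Longrightarrow> x \<in> {a..b} \<Longrightarrow> (f n has_vector_derivative g n x) (at x within {a..b})"
    and ug: "uniform_limit {a..b} (\<lambda>F x. \<Sum>n\<in>F. g n x) G (finite_subsets_at_top A)"
    and pf: "\<And>x. x \<in> {a..b} \<Longrightarrow> ((\<lambda>F. \<Sum>n\<in>F. f n x) \<longlongrightarrow> Sf x) (finite_subsets_at_top A)"
    and x: "x \<in> {a..b}"
  shows "(Sf has_vector_derivative G x) (at x within {a..b})"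
proof -
  define FF where "FF = finite_subsets_at_top A"
  have FFnb: "FF \<noteq> bot" unfolding FF_def by (rule finite_subsets_at_top_neq_bot)
  define gg where "gg F s = (\<Sum>n\<in>F\<inter>A. g n s)" for F s
  have evA: "\<forall>\<^sub>F F in FF. finite F \<and> F \<subseteq> A"
    unfolding FF_def by (rule eventually_finite_subsets_at_top_weakI) auto
  have ug': "uniform_limit {a..b} gg G FF"
  proof -
    have "\<forall>\<^sub>F F in FF. \<forall>s\<in>{a..b}. (\<Sum>n\<in>F. g n s) = gg F s"
      using evA by eventually_elim (auto simp: gg_def Int_absorb2)
    note ev = this
    have eq: "uniform_limit {a..b} (\<lambda>F x. \<Sum>n\<in>F. g n x) G FF = uniform_limit {a..b} gg G FF"
      using ev by (intro uniform_limit_cong) auto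
    have ug0: "uniform_limit {a..b} (\<lambda>F x. \<Sum>n\<in>F. g n x) G FF"
      using ug unfolding FF_def .
    show ?thesis using eq ug0 by (rule iffD1)
  qed
  have ggc: "continuous_on {a..b} (gg F)" for F
    unfolding gg_def by (intro continuous_on_sum gc) auto
  have Gc: "continuous_on {a..b} G"
    by (rule uniform_limit_theorem[OF _ ug']) (auto simp: ggc FFnb)
  have key: "Sf y = Sf a + integral {a..y} G" if y: "y \<in> {a..b}" for y
  proof -
    have sub: "{a..y} \<subseteq> {a..b}" using y by auto
    have ug'': "uniform_limit {a..y} gg G FF"
      by (rule uniform_limit_on_subset[OF ug' sub])
    obtain I J where I: "\<And>F. (gg F has_integral I F) {a..y}" and J: "(G has_integral J) {a..y}"
      and IJ: "(I \<longlongrightarrow> J) FF"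
      using uniform_limit_integral[OF ug'' _ FFnb] continuous_on_subset[OF ggc sub] by metis
    have "\<forall>\<^sub>F F in FF. (\<Sum>n\<in>F. f n y) - (\<Sum>n\<in>F. f n a) = I F"
      using evA
    proof eventually_elim
      case (elim F)
      have "(g n has_integral (f n y - f n a)) {a..y}" if "n \<in> F" for n
      proof (rule fundamental_theorem_of_calculus)
        show "a \<le> y" using y by auto
        fix s assume "s \<in> {a..y}"
        then show "(f n has_vector_derivative g n s) (at s within {a..y})"
          using fd[of n s] that elim sub by (meson has_vector_derivative_within_subset subsetD)
      qed
      then have "((\<lambda>s. \<Sum>n\<in>F. g n s) has_integral (\<Sum>n\<in>F. f n y - f n a)) {a..y}"
        using elim by (intro has_integral_sum) auto
      moreover have "gg F = (\<lambda>s. \<Sum>n\<in>F. g n s)"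
        using elim by (auto simp: gg_def Int_absorb2)
      ultimately have "(gg F has_integral (\<Sum>n\<in>F. f n y - f n a)) {a..y}" by simp
      then have "I F = (\<Sum>n\<in>F. f n y - f n a)" using I[of F] by (rule has_integral_unique[rotated])
      then show ?case by (simp add: sum_subtractf)
    qed
    moreover have "((\<lambda>F. (\<Sum>n\<in>F. f n y) - (\<Sum>n\<in>F. f n a)) \<longlongrightarrow> Sf y - Sf a) FF"
      unfolding FF_def using y ab by (intro tendsto_diff pf) auto
    ultimately have "(I \<longlongrightarrow> Sf y - Sf a) FF"
      by (rule Lim_transform_eventually[rotated])
    then have "Sf y - Sf a = J" by (rule tendsto_unique[OF FFnb _ IJ])
    moreover have "J = integral {a..y} G" using J by (simp add: integral_unique)
    ultimately have "Sf y - Sf a = integral {a..y} G" by simp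
    then have "Sf y = integral {a..y} G + Sf a" by (metis diff_add_cancel)
    then show ?thesis by (simp add: add.commute)
  qed
  have "((\<lambda>y. Sf a + integral {a..y} G) has_vector_derivative 0 + G x) (at x within {a..b})"
    by (intro derivative_intros integral_has_vector_derivative Gc x)
  then have "((\<lambda>y. Sf a + integral {a..y} G) has_vector_derivative G x) (at x within {a..b})"
    by simp
  then show ?thesis
  proof (rule has_vector_derivative_transform[where f="\<lambda>y. Sf a + integral {a..y} G", rotated 2])
    show "x \<in> {a..b}" by (rule x)
    fix y assume "y \<in> {a..b}" then show "Sf y = Sf a + integral {a..y} G" by (rule key)
  qed
qed


lemma has_sum_sum_fin:
  fixes f :: "'i \<Rightarrow> 'a \<Rightarrow> complex"
  assumes "finite I" "\<And>i. i \<in> I \<Longrightarrow> ((\<lambda>n. f i n) has_sum s i) A"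
  shows "((\<lambda>n. \<Sum>i\<in>I. f i n) has_sum (\<Sum>i\<in>I. s i)) A"
  using assms by (induction I rule: finite_induct) (auto intro!: has_sum_add)

lemma length_dec[simp]: "length (dec n i) = length n"
  by (simp add: dec_def)

lemma nth_dec: "k < length n \<Longrightarrow> dec n i ! k = (if k = i then n ! i - 1 else n ! k)"
  by (simp add: dec_def nth_list_update)

lemma sum_list_update_nat: "i < length n \<Longrightarrow> sum_list (n[i := v]) + n ! i = sum_list n + (v::nat)"
  by (induction n arbitrary: i) (auto split: nat.splits)

lemma sum_list_dec: "i < length n \<Longrightarrow> 0 < n ! i \<Longrightarrow> sum_list (dec n i) = sum_list n - 1"
  unfolding dec_def using sum_list_update_nat[of i n "n!i - 1"] by simp


lemma has_sum_shift:
  assumes F: "(F has_sum S) {n::nat list. length n = d}" and i: "i < d"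
  shows "((\<lambda>n. if 0 < n ! i then F (dec n i) else 0) has_sum S) {n. length n = d}"
proof -
  define B where "B = {n::nat list. length n = d \<and> 0 < n ! i}"
  define inc where "inc m = m[i := m ! i + 1]" for m :: "nat list"
  have bij: "bij_betw (\<lambda>n. dec n i) B {n. length n = d}"
  proof (rule bij_betw_byWitness[where f'=inc])
    show "\<forall>a\<in>B. inc (dec a i) = a"
      using i by (auto simp: B_def inc_def dec_def list_eq_iff_nth_eq nth_list_update)
    show "\<forall>a'\<in>{n. length n = d}. dec (inc a') i = a'"
      using i by (auto simp: inc_def dec_def list_eq_iff_nth_eq nth_list_update)
    show "(\<lambda>n. dec n i) ` B \<subseteq> {n. length n = d}" by (auto simp: B_def)
    show "inc ` {n. length n = d} \<subseteq> B" using i by (auto simp: B_def inc_def nth_list_update)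
  qed
  have "((\<lambda>n. F (dec n i)) has_sum S) B"
    using has_sum_reindex_bij_betw[OF bij, of F S] F by simp
  then show ?thesis
    by (subst has_sum_cong_neutral[where T=B]) (auto simp: B_def)
qed

lemma has_sum_shift_sum:
  fixes F :: "nat list \<Rightarrow> complex" and c :: "nat \<Rightarrow> complex"
  assumes F: "F summable_on {n::nat list. length n = d}"
  shows "((\<lambda>n. \<Sum>i<d. if 0 < n ! i then c i * F (dec n i) else 0) has_sum
           (\<Sum>i<d. c i * infsum F {n. length n = d})) {n. length n = d}"
proof (rule has_sum_sum_fin)
  fix i assume i: "i \<in> {..<d}"
  have "((\<lambda>n. if 0 < n ! i then F (dec n i) else 0) has_sum infsum F {n. length n = d}) {n. length n = d}"
    using has_sum_shift[OF has_sum_infsum[OF F]] i by simp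
  then have "((\<lambda>n. c i * (if 0 < n ! i then F (dec n i) else 0)) has_sum c i * infsum F {n. length n = d}) {n. length n = d}"
    by (rule has_sum_cmult_right)
  then show "((\<lambda>n. if 0 < n ! i then c i * F (dec n i) else 0) has_sum c i * infsum F {n. length n = d}) {n. length n = d}"
    by (simp add: if_distrib cong: if_cong)
qed auto

definition PP :: "real \<Rightarrow> nat list \<Rightarrow> real" where
  "PP G n = prod_list (map (\<lambda>k. G ^ k / fact k) n)"

lemma PP_nonneg: "G \<ge> 0 \<Longrightarrow> PP G n \<ge> 0"
  unfolding PP_def by (induction n) auto

lemma PP_summable:
  assumes G: "G \<ge> 0"
  shows "PP G summable_on {n. length n = d}"
proof (induction d)
  case 0
  have "{n::nat list. length n = 0} = {[]}" by auto
  then show ?case by simp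
next
  case (Suc d)
  define B where "B = {n::nat list. length n = d}"
  have img: "{n::nat list. length n = Suc d} = (\<lambda>(k,ns). k # ns) ` (UNIV \<times> B)"
    by (auto simp: B_def length_Suc_conv image_iff)
  have inj: "inj_on (\<lambda>(k::nat,ns). k # ns) (UNIV \<times> B)" by (auto simp: inj_on_def)
  have "(\<lambda>(k,ns). G ^ k / fact k * PP G ns) summable_on Sigma UNIV (\<lambda>_. B)"
  proof (rule summable_on_SigmaI)
    fix k :: nat
    have "(PP G has_sum infsum (PP G) B) B" using Suc.IH by (simp add: B_def)
    from has_sum_cmult_right[OF this, of "G^k/fact k"]
    show "((\<lambda>ns. (\<lambda>(k,ns). G ^ k / fact k * PP G ns) (k, ns)) has_sum G ^ k / fact k * infsum (PP G) B) B"
      by simp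
  next
    have "summable (\<lambda>k. inverse (fact k) * G ^ k)" by (rule summable_exp)
    then have "summable (\<lambda>k::nat. G ^ k / fact k * infsum (PP G) B)"
      by (intro summable_mult2) (simp add: divide_inverse mult.commute)
    then show "(\<lambda>k. G ^ k / fact k * infsum (PP G) B) summable_on UNIV"
      using G PP_nonneg by (subst summable_on_UNIV_nonneg_real_iff) (auto intro!: infsum_nonneg divide_nonneg_nonneg mult_nonneg_nonneg)
  next
    fix k ns show "0 \<le> (\<lambda>(k,ns). G ^ k / fact k * PP G ns) (k, ns)"
      using G PP_nonneg by simp
  qed
  then have "(PP G \<circ> (\<lambda>(k,ns). k # ns)) summable_on (UNIV \<times> B)"
    by (rule summable_on_cong[THEN iffD1, rotated]) (auto simp: PP_def)
  then show ?case
    using summable_on_reindex[OF inj, of "PP G"] img by simp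
qed

lemma fact_sum_le: "real (fact a * fact b) \<le> fact (a + b)"
proof -
  have "fact a * fact b \<le> (fact (a + b) :: nat)"
    by (rule dvd_imp_le[OF fact_fact_dvd_fact]) auto
  then show ?thesis by (metis of_nat_fact of_nat_le_iff)
qed

lemma pow_fact_le_PP:
  fixes G :: real
  assumes G: "G \<ge> 0"
  shows "G ^ sum_list n / fact (sum_list n) \<le> PP G n"
proof (induction n)
  case Nil then show ?case by (simp add: PP_def)
next
  case (Cons k ns)
  have "G ^ sum_list (k # ns) / fact (sum_list (k # ns)) = G^k * G^sum_list ns / fact (k + sum_list ns)"
    by (simp add: power_add)
  also have "\<dots> \<le> G^k * G^sum_list ns / (fact k * fact (sum_list ns))"
    using fact_sum_le[of k "sum_list ns"] G
    by (intro divide_left_mono) (auto intro!: mult_pos_pos)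
  also have "\<dots> = G^k / fact k * (G^sum_list ns / fact (sum_list ns))" by simp
  also have "\<dots> \<le> G^k / fact k * PP G ns"
    using Cons G by (intro mult_left_mono) auto
  finally show ?case by (simp add: PP_def)
qed

lemma summable_lists:
  fixes G :: real
  assumes G: "G \<ge> 0"
  shows "(\<lambda>n::nat list. G ^ sum_list n / fact (sum_list n)) summable_on {n. length n = d}"
  by (rule summable_on_comparison_test[OF PP_summable[OF G]]) (use G pow_fact_le_PP in auto)


lemma even_sum_list_nat: "(\<And>i. i < length j \<Longrightarrow> even (j ! i)) \<Longrightarrow> even (sum_list (j::nat list))"
proof (induction j)
  case (Cons a j)
  have "even a" using Cons.prems[of 0] by simp
  moreover have "even (sum_list j)" using Cons.prems[of "Suc _"] by (intro Cons.IH) auto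
  ultimately show ?case by simp
qed simp

lemma odd_idx_eq:
  assumes "admissible j" "i < length j" "odd (j ! i)"
  shows "odd_idx j = i"
  unfolding odd_idx_def
proof (rule the_equality)
  show "i < length j \<and> odd (j ! i)" using assms by simp
  fix k assume k: "k < length j \<and> odd (j ! k)"
  have "finite {i. i < length j \<and> odd (j ! i)}" by simp
  moreover have "card {i. i < length j \<and> odd (j ! i)} \<le> Suc 0"
    using assms(1) by (simp add: admissible_def)
  ultimately show "k = i" using k assms(2,3) card_le_Suc0_iff_eq by blast
qed

lemma odd_idx_ex:
  assumes "admissible j" "odd (sum_list j)"
  shows "odd_idx j < length j \<and> odd (j ! odd_idx j)"
proof -
  obtain i where "i < length j" "odd (j ! i)"
    using even_sum_list_nat assms(2) by blast
  then show ?thesis using odd_idx_eq[OF assms(1)] by simp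
qed

lemma length_dbl[simp]: "length (dbl n) = length n" by (simp add: dbl_def)
lemma nth_dbl[simp]: "i < length n \<Longrightarrow> dbl n ! i = 2 * (n ! i)" by (simp add: dbl_def)
lemma sum_list_dbl[simp]: "sum_list (dbl n) = 2 * sum_list n"
  unfolding dbl_def by (induction n) auto

lemma admissible_dbl: "admissible (dbl n)"
proof -
  have "{i. i < length n \<and> odd (dbl n ! i)} = {}" by auto
  then show ?thesis unfolding admissible_def length_dbl by (simp only: card.empty)
qed

lemma admissible_dec_dbl:
  assumes "i < length n" "0 < n ! i"
  shows "admissible (dec (dbl n) i)" "odd_idx (dec (dbl n) i) = i"
proof -
  have "{k. k < length (dec (dbl n) i) \<and> odd (dec (dbl n) i ! k)} \<subseteq> {i}"
    using assms by (auto simp: nth_dec split: if_splits)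
  then have "card {k. k < length (dec (dbl n) i) \<and> odd (dec (dbl n) i ! k)} \<le> card {i}"
    by (intro card_mono) auto
  then show adm: "admissible (dec (dbl n) i)" by (simp add: admissible_def)
  show "odd_idx (dec (dbl n) i) = i"
    by (rule odd_idx_eq[OF adm]) (use assms in \<open>auto simp: nth_dec\<close>)
qed

lemma dec_dec_dbl:
  assumes "i < length n" "0 < n ! i"
  shows "dec (dec (dbl n) i) i = dbl (dec n i)"
  using assms by (auto simp: list_eq_iff_nth_eq nth_dec)

lemma nth_dec_dbl_pos: "i < length n \<Longrightarrow> 0 < n ! i \<Longrightarrow> 0 < dec (dbl n) i ! i"
  by (simp add: nth_dec)

lemma norm_sum_le_const:
  fixes f :: "nat \<Rightarrow> complex"
  assumes "\<And>i. i < d \<Longrightarrow> norm (f i) \<le> c"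
  shows "norm (\<Sum>i<d. f i) \<le> d * c"
proof -
  have "norm (\<Sum>i<d. f i) \<le> (\<Sum>i<d. norm (f i))" by (rule norm_sum)
  also have "\<dots> \<le> (\<Sum>i<d. c)" by (rule sum_mono) (use assms in auto)
  finally show ?thesis by simp
qed

locale setting =
  fixes d :: nat and x0 x1 x2 :: real and p q u0 u0' :: "real \<Rightarrow> complex"
    and r :: "nat \<Rightarrow> real \<Rightarrow> complex"
  assumes d1: "d \<ge> 1" and x12: "x1 < x2" and x0I: "x0 \<in> {x1..x2}"
    and pc: "continuous_on {x1..x2} p" and qc: "continuous_on {x1..x2} q"
    and rc: "\<forall>i<d. continuous_on {x1..x2} (r i)"
    and pnz: "\<forall>x\<in>{x1..x2}. p x \<noteq> 0"
    and ode0: "ode_sol {x1..x2} p q (\<lambda>_. 0) u0 u0'"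
    and u0nz: "\<forall>x\<in>{x1..x2}. u0 x \<noteq> 0"
begin

abbreviation "II \<equiv> {x1..x2}"

lemma u0d: "x \<in> II \<Longrightarrow> (u0 has_vector_derivative u0' x) (at x within II)"
  using ode0 by (simp add: ode_sol_def)

lemma pu0d: "x \<in> II \<Longrightarrow> ((\<lambda>t. p t * u0' t) has_vector_derivative (- q x * u0 x)) (at x within II)"
  using ode0 by (simp add: ode_sol_def)

lemma u0c: "continuous_on II u0"
  by (rule deriv_cont) (rule u0d)

lemma hc: "continuous_on II (\<lambda>s. 1 / (p s * u0 s ^ 2))"
  using pnz u0nz by (intro continuous_intros pc u0c) auto

lemma ruc: "i < d \<Longrightarrow> continuous_on II (\<lambda>s. r i s * u0 s ^ 2)"
  using rc by (intro continuous_intros u0c) auto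

lemma bound_ex: "continuous_on II (f :: real \<Rightarrow> complex) \<Longrightarrow> \<exists>B. \<forall>s\<in>II. norm (f s) \<le> B"
  by (metis bounded_iff compact_Icc compact_continuous_image compact_imp_bounded image_eqI)

lemma K_ex: "\<exists>K. K \<ge> 1 \<and> (\<forall>s\<in>II. norm (1 / (p s * u0 s ^ 2)) \<le> K) \<and>
   (\<forall>i<d. \<forall>s\<in>II. norm (r i s * u0 s ^ 2) \<le> K)"
proof -
  obtain B0 where B0: "\<forall>s\<in>II. norm (1 / (p s * u0 s ^ 2)) \<le> B0" using bound_ex[OF hc] by blast
  have "\<forall>i. \<exists>B. i < d \<longrightarrow> (\<forall>s\<in>II. norm (r i s * u0 s ^ 2) \<le> B)"
    using bound_ex[OF ruc] by blast
  then obtain B where B: "\<And>i. i < d \<Longrightarrow> \<forall>s\<in>II. norm (r i s * u0 s ^ 2) \<le> B i"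
    by metis
  define K where "K = 1 + \<bar>B0\<bar> + (\<Sum>i<d. \<bar>B i\<bar>)"
  have "\<bar>B i\<bar> \<le> (\<Sum>i<d. \<bar>B i\<bar>)" if "i < d" for i
    using that by (intro member_le_sum) auto
  moreover have "0 \<le> (\<Sum>i<d. \<bar>B i\<bar>)" by (intro sum_nonneg) auto
  ultimately show ?thesis using B0 B
    by (intro exI[of _ K]) (force simp: K_def)+
qed

definition K where "K = (SOME K. K \<ge> 1 \<and> (\<forall>s\<in>II. norm (1 / (p s * u0 s ^ 2)) \<le> K) \<and>
   (\<forall>i<d. \<forall>s\<in>II. norm (r i s * u0 s ^ 2) \<le> K))"

lemma K_props: "K \<ge> 1" "\<And>s. s \<in> II \<Longrightarrow> norm (1 / (p s * u0 s ^ 2)) \<le> K"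
  "\<And>i s. i < d \<Longrightarrow> s \<in> II \<Longrightarrow> norm (r i s * u0 s ^ 2) \<le> K"
  using someI_ex[OF K_ex] unfolding K_def[symmetric] by auto

lemma lvl_step:
  assumes hc: "continuous_on II h" and hb: "\<And>s. s \<in> II \<Longrightarrow> norm (h s) \<le> M * \<bar>s - x0\<bar> ^ k"
    and x: "x \<in> II"
  shows "norm (of_nat (Suc k) * oint x0 x h) \<le> M * \<bar>x - x0\<bar> ^ Suc k"
proof -
  have "norm (oint x0 x h) \<le> M * \<bar>x - x0\<bar> ^ Suc k / Suc k"
    by (rule oint_bound[OF hc x0I x hb])
  then have "Suc k * norm (oint x0 x h) \<le> M * \<bar>x - x0\<bar> ^ Suc k"
    by (simp add: field_simps del: of_nat_Suc)
  then show ?thesis by (simp add: norm_mult del: of_nat_Suc)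
qed

lemma dK_ge: "K \<le> d * K" "0 \<le> K"
  using K_props(1) d1 by (auto simp: mult_le_cancel_right1)

end


lemma cont_if_const: "(c \<Longrightarrow> continuous_on S f) \<Longrightarrow> continuous_on S (\<lambda>x. if c then f x else (0::complex))"
  by (cases c) auto

context setting begin

lemma pw: "((c::real) * c ^ n) * t ^ Suc n = (c * t) ^ Suc n" by (simp add: power_mult_distrib)

lemma pow_split: "(a * b) ^ n = a ^ n * (b::real) ^ n" by (simp add: power_mult_distrib)

lemma XtL_props:
  "length j = d \<Longrightarrow> sum_list j = n \<Longrightarrow> continuous_on II (XtL x0 p r u0 n j) \<and>
     (\<forall>x\<in>II. norm (XtL x0 p r u0 n j x) \<le> (d * K * \<bar>x - x0\<bar>) ^ n)"
proof (induction n arbitrary: j)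
  case 0
  then show ?case by simp
next
  case (Suc n)
  have K0: "0 \<le> K" "K \<le> d * K" using dK_ge by auto
  show ?case
  proof (cases "admissible j")
    case False
    then show ?thesis using K0 by simp
  next
    case adm: True
    show ?thesis
    proof (cases "odd (Suc n)")
      case od: True
      define i where "i = odd_idx j"
      have i: "i < d" "odd (j ! i)" using odd_idx_ex[OF adm] od Suc.prems by (auto simp: i_def)
      have pos: "0 < j ! i" using i(2) by (cases "j ! i") auto
      have sdec: "sum_list (dec j i) = n" using sum_list_dec[of i j] Suc.prems i pos by simp
      note IH = Suc.IH[of "dec j i", simplified, OF Suc.prems(1) sdec]
      define h where "h = (\<lambda>s. r i s * u0 s^2 * XtL x0 p r u0 n (dec j i) s)"
      have eq: "XtL x0 p r u0 (Suc n) j = (\<lambda>x. of_nat (Suc n) * oint x0 x h)"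
        using adm od pos by (simp add: h_def Let_def i_def[symmetric] del: of_nat_Suc)
      have hcont: "continuous_on II h"
        unfolding h_def using IH rc i(1) u0c by (intro continuous_intros) auto
      have hb: "norm (h s) \<le> (K * (d*K)^n) * \<bar>s - x0\<bar> ^ n" if s: "s \<in> II" for s
      proof -
        have "norm (h s) = norm (r i s * u0 s^2) * norm (XtL x0 p r u0 n (dec j i) s)"
          by (simp add: h_def norm_mult)
        also have "\<dots> \<le> K * (d * K * \<bar>s - x0\<bar>) ^ n"
          using IH s K_props(3)[OF i(1) s] K0 by (intro mult_mono) auto
        finally show ?thesis by (simp add: pow_split)
      qed
      have "norm (XtL x0 p r u0 (Suc n) j x) \<le> (d * K * \<bar>x - x0\<bar>) ^ Suc n" if x: "x \<in> II" for x
      proof -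
        have "norm (XtL x0 p r u0 (Suc n) j x) \<le> (K * (d*K)^n) * \<bar>x - x0\<bar> ^ Suc n"
          unfolding eq by (rule lvl_step[OF hcont hb x])
        also have "\<dots> \<le> (d*K * (d*K)^n) * \<bar>x - x0\<bar> ^ Suc n"
          using K0 by (intro mult_right_mono) auto
        finally show ?thesis by (simp only: pw)
      qed
      moreover have "continuous_on II (XtL x0 p r u0 (Suc n) j)"
        unfolding eq using hcont x0I by (intro continuous_intros oint_cont) auto
      ultimately show ?thesis by blast
    next
      case ev: False
      define h where "h = (\<lambda>s. (\<Sum>i<d. if 0 < j ! i then XtL x0 p r u0 n (dec j i) s else 0) / (p s * u0 s^2))"
      have eq: "XtL x0 p r u0 (Suc n) j = (\<lambda>x. of_nat (Suc n) * oint x0 x h)"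
        using adm ev Suc.prems by (simp add: h_def del: of_nat_Suc)
      have IH: "continuous_on II (XtL x0 p r u0 n (dec j i)) \<and>
          (\<forall>x\<in>II. norm (XtL x0 p r u0 n (dec j i) x) \<le> (d * K * \<bar>x - x0\<bar>) ^ n)"
        if "i < d" "0 < j ! i" for i
        using Suc.IH[of "dec j i"] sum_list_dec[of i j] Suc.prems that by simp
      have hcont: "continuous_on II h"
        unfolding h_def using IH pnz u0nz by (intro continuous_intros pc u0c cont_if_const) auto
      have hb: "norm (h s) \<le> (d * K * (d*K)^n) * \<bar>s - x0\<bar> ^ n" if s: "s \<in> II" for s
      proof -
        have "norm (h s) = norm (\<Sum>i<d. if 0 < j ! i then XtL x0 p r u0 n (dec j i) s else 0) * norm (1 / (p s * u0 s^2))"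
          by (simp add: h_def norm_divide norm_mult)
        also have "\<dots> \<le> (d * (d * K * \<bar>s - x0\<bar>) ^ n) * K"
        proof (intro mult_mono norm_sum_le_const)
          fix i assume "i < d"
          then show "norm (if 0 < j ! i then XtL x0 p r u0 n (dec j i) s else 0) \<le> (d * K * \<bar>s - x0\<bar>) ^ n"
            using IH[of i] s K0 by auto
        qed (use K_props(2)[OF s] K0 in auto)
        finally show ?thesis by (simp add: pow_split mult_ac)
      qed
      have "norm (XtL x0 p r u0 (Suc n) j x) \<le> (d * K * \<bar>x - x0\<bar>) ^ Suc n" if x: "x \<in> II" for x
      proof -
        have "norm (XtL x0 p r u0 (Suc n) j x) \<le> (d * K * (d*K)^n) * \<bar>x - x0\<bar> ^ Suc n"
          unfolding eq by (rule lvl_step[OF hcont hb x])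
        then show ?thesis by (simp only: pw)
      qed
      moreover have "continuous_on II (XtL x0 p r u0 (Suc n) j)"
        unfolding eq using hcont x0I by (intro continuous_intros oint_cont) auto
      ultimately show ?thesis by blast
    qed
  qed
qed

lemma XL_props:
  "length m = d \<Longrightarrow> sum_list m = n \<Longrightarrow> continuous_on II (XL x0 p r u0 n m) \<and>
     (\<forall>x\<in>II. norm (XL x0 p r u0 n m x) \<le> (d * K * \<bar>x - x0\<bar>) ^ Suc n)"
proof (induction n arbitrary: m)
  case 0
  have K0: "0 \<le> K" "K \<le> d * K" using dK_ge by auto
  define h where "h = (\<lambda>s. 1 / (p s * u0 s^2))"
  have sd: "(\<Sum>i<d. 1 / of_nat d) = (1::complex)" using d1 by simp
  have eq: "XL x0 p r u0 0 m = (\<lambda>x. of_nat (Suc 0) * oint x0 x h)"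
    using 0 sd by (simp add: h_def)
  have hcont: "continuous_on II h" unfolding h_def by (rule hc)
  have hb: "norm (h s) \<le> K * \<bar>s - x0\<bar> ^ 0" if "s \<in> II" for s
    using K_props(2)[OF that] by (simp add: h_def)
  have "norm (XL x0 p r u0 0 m x) \<le> (d * K * \<bar>x - x0\<bar>) ^ Suc 0" if x: "x \<in> II" for x
  proof -
    have "norm (XL x0 p r u0 0 m x) \<le> K * \<bar>x - x0\<bar> ^ Suc 0"
      unfolding eq by (rule lvl_step[OF hcont hb x])
    also have "\<dots> \<le> d * K * \<bar>x - x0\<bar> ^ Suc 0" using K0 by (intro mult_right_mono) auto
    finally show ?thesis by simp
  qed
  moreover have "continuous_on II (XL x0 p r u0 0 m)"
    unfolding eq using hcont x0I by (intro continuous_intros oint_cont) auto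
  ultimately show ?case by blast
next
  case (Suc n)
  have K0: "0 \<le> K" "K \<le> d * K" using dK_ge by auto
  show ?case
  proof (cases "admissible m")
    case False
    then show ?thesis using K0 by simp
  next
    case adm: True
    show ?thesis
    proof (cases "even (Suc n + 1)")
      case od: True
      define i where "i = odd_idx m"
      have i: "i < d" "odd (m ! i)" using odd_idx_ex[OF adm] od Suc.prems by (auto simp: i_def)
      have pos: "0 < m ! i" using i(2) by (cases "m ! i") auto
      have sdec: "sum_list (dec m i) = n" using sum_list_dec[of i m] Suc.prems i pos by simp
      note IH = Suc.IH[of "dec m i", simplified, OF Suc.prems(1) sdec]
      define h where "h = (\<lambda>s. r i s * u0 s^2 * XL x0 p r u0 n (dec m i) s)"
      have eq: "XL x0 p r u0 (Suc n) m = (\<lambda>x. of_nat (Suc (Suc n)) * oint x0 x h)"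
        using adm od pos by (simp add: h_def Let_def i_def[symmetric] del: of_nat_Suc)
      have hcont: "continuous_on II h"
        unfolding h_def using IH rc i(1) u0c by (intro continuous_intros) auto
      have hb: "norm (h s) \<le> (K * (d*K)^Suc n) * \<bar>s - x0\<bar> ^ Suc n" if s: "s \<in> II" for s
      proof -
        have "norm (h s) = norm (r i s * u0 s^2) * norm (XL x0 p r u0 n (dec m i) s)"
          by (simp add: h_def norm_mult)
        also have "\<dots> \<le> K * (d * K * \<bar>s - x0\<bar>) ^ Suc n"
          using IH s K_props(3)[OF i(1) s] K0 by (intro mult_mono) auto
        finally show ?thesis by (simp only: pow_split mult.assoc)
      qed
      have "norm (XL x0 p r u0 (Suc n) m x) \<le> (d * K * \<bar>x - x0\<bar>) ^ Suc (Suc n)" if x: "x \<in> II" for x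
      proof -
        have "norm (XL x0 p r u0 (Suc n) m x) \<le> (K * (d*K)^Suc n) * \<bar>x - x0\<bar> ^ Suc (Suc n)"
          unfolding eq by (rule lvl_step[OF hcont hb x])
        also have "\<dots> \<le> (d*K * (d*K)^Suc n) * \<bar>x - x0\<bar> ^ Suc (Suc n)"
          using K0 by (intro mult_right_mono) auto
        finally show ?thesis by (simp only: pw)
      qed
      moreover have "continuous_on II (XL x0 p r u0 (Suc n) m)"
        unfolding eq using hcont x0I by (intro continuous_intros oint_cont) auto
      ultimately show ?thesis by blast
    next
      case ev: False
      define h where "h = (\<lambda>s. (\<Sum>i<d. if 0 < m ! i then XL x0 p r u0 n (dec m i) s else 0) / (p s * u0 s^2))"
      have eq: "XL x0 p r u0 (Suc n) m = (\<lambda>x. of_nat (Suc (Suc n)) * oint x0 x h)"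
        using adm ev Suc.prems by (simp add: h_def del: of_nat_Suc)
      have IH: "continuous_on II (XL x0 p r u0 n (dec m i)) \<and>
          (\<forall>x\<in>II. norm (XL x0 p r u0 n (dec m i) x) \<le> (d * K * \<bar>x - x0\<bar>) ^ Suc n)"
        if "i < d" "0 < m ! i" for i
        using Suc.IH[of "dec m i"] sum_list_dec[of i m] Suc.prems that by simp
      have hcont: "continuous_on II h"
        unfolding h_def using IH pnz u0nz by (intro continuous_intros pc u0c cont_if_const) auto
      have hb: "norm (h s) \<le> (d * K * (d*K)^Suc n) * \<bar>s - x0\<bar> ^ Suc n" if s: "s \<in> II" for s
      proof -
        have "norm (h s) = norm (\<Sum>i<d. if 0 < m ! i then XL x0 p r u0 n (dec m i) s else 0) * norm (1 / (p s * u0 s^2))"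
          by (simp add: h_def norm_divide norm_mult)
        also have "\<dots> \<le> (d * (d * K * \<bar>s - x0\<bar>) ^ Suc n) * K"
        proof (intro mult_mono norm_sum_le_const)
          fix i assume "i < d"
          then show "norm (if 0 < m ! i then XL x0 p r u0 n (dec m i) s else 0) \<le> (d * K * \<bar>s - x0\<bar>) ^ Suc n"
            using IH[of i] s K0 by auto
        qed (use K_props(2)[OF s] K0 in auto)
        also have "\<dots> = (d * K * (d*K)^Suc n) * \<bar>s - x0\<bar> ^ Suc n"
          by (simp only: pow_split mult_ac)
        finally show ?thesis .
      qed
      have "norm (XL x0 p r u0 (Suc n) m x) \<le> (d * K * \<bar>x - x0\<bar>) ^ Suc (Suc n)" if x: "x \<in> II" for x
      proof -
        have "norm (XL x0 p r u0 (Suc n) m x) \<le> (d * K * (d*K)^Suc n) * \<bar>x - x0\<bar> ^ Suc (Suc n)"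
          unfolding eq by (rule lvl_step[OF hcont hb x])
        then show ?thesis by (simp only: pw)
      qed
      moreover have "continuous_on II (XL x0 p r u0 (Suc n) m)"
        unfolding eq using hcont x0I by (intro continuous_intros oint_cont) auto
      ultimately show ?thesis by blast
    qed
  qed
qed

end

lemma lampow_dec:
  assumes "i < length n" "0 < n ! i"
  shows "lampow lam n = lam i * lampow lam (dec n i)"
proof -
  have fin: "finite {..<length n}" by simp
  have "lampow lam n = lam i ^ (n ! i) * (\<Prod>k\<in>{..<length n} - {i}. lam k ^ (n ! k))"
    unfolding lampow_def using assms by (subst prod.remove[OF fin, of i]) auto
  also have "(\<Prod>k\<in>{..<length n} - {i}. lam k ^ (n ! k)) = (\<Prod>k\<in>{..<length n} - {i}. lam k ^ (dec n i ! k))"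
    by (rule prod.cong) (auto simp: nth_dec)
  also have "lam i ^ (n ! i) = lam i * lam i ^ (dec n i ! i)"
    using assms by (cases "n ! i") (auto simp: nth_dec)
  finally have "lampow lam n = lam i * (lam i ^ (dec n i ! i) * (\<Prod>k\<in>{..<length n} - {i}. lam k ^ (dec n i ! k)))"
    by (simp add: mult_ac)
  also have "lam i ^ (dec n i ! i) * (\<Prod>k\<in>{..<length n} - {i}. lam k ^ (dec n i ! k)) = lampow lam (dec n i)"
    unfolding lampow_def length_dec using assms by (subst prod.remove[OF fin, of i]) auto
  finally show ?thesis .
qed

lemma all_zero_of_sum0: "sum_list (n::nat list) = 0 \<Longrightarrow> k < length n \<Longrightarrow> n ! k = 0"
  using elem_le_sum_list[of k n] by simp

lemma ex_nonzero: "0 < sum_list (n::nat list) \<Longrightarrow> \<exists>k<length n. n ! k \<noteq> 0"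
proof (rule ccontr)
  assume "0 < sum_list n" "\<not> (\<exists>k<length n. n ! k \<noteq> 0)"
  then have "\<forall>x\<in>set n. x = 0" by (auto simp: in_set_conv_nth)
  then have "sum_list n = 0" by simp
  with \<open>0 < sum_list n\<close> show False by simp
qed

context setting begin

lemma Xt_cont: "length j = d \<Longrightarrow> continuous_on II (Xt x0 p r u0 j)"
  unfolding Xt_def using XtL_props by blast

lemma Xf_cont: "length j = d \<Longrightarrow> continuous_on II (Xf x0 p r u0 j)"
  unfolding Xf_def using XL_props by blast

lemma Xt_minus_cont: "length j = d \<Longrightarrow> continuous_on II (Xt_minus x0 p r u0 j i)"
  unfolding Xt_minus_def using Xt_cont by simp

lemma Xf_minus_cont: "length j = d \<Longrightarrow> continuous_on II (Xf_minus x0 p r u0 j i)"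
  unfolding Xf_minus_def using Xf_cont by (simp add: continuous_on_const)

lemma Xt_dbl:
  assumes n: "length n = d" and s: "0 < sum_list n"
  shows "Xt x0 p r u0 (dbl n) = (\<lambda>x. of_nat (2 * sum_list n) *
     oint x0 x (\<lambda>s. (\<Sum>i<d. Xt_minus x0 p r u0 (dbl n) i s) / (p s * u0 s^2)))"
proof -
  obtain k where k: "2 * sum_list n = Suc k" using s by (cases "2 * sum_list n") auto
  have ev: "even (Suc k)" using k by (metis dvd_triv_left)
  have inner: "(\<Sum>i<length (dbl n). if 0 < dbl n ! i then XtL x0 p r u0 k (dec (dbl n) i) s else 0)
     = (\<Sum>i<d. Xt_minus x0 p r u0 (dbl n) i s)" for s
    by (rule sum.cong) (use n k in \<open>auto simp: Xt_minus_def Xt_def sum_list_dec\<close>)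
  have "Xt x0 p r u0 (dbl n) = XtL x0 p r u0 (Suc k) (dbl n)" by (simp add: Xt_def k)
  also have "\<dots> = (\<lambda>x. of_nat (Suc k) * oint x0 x (\<lambda>s. (\<Sum>i<length (dbl n). if 0 < dbl n ! i then XtL x0 p r u0 k (dec (dbl n) i) s else 0) / (p s * u0 s^2)))"
    using ev admissible_dbl[of n] by (simp del: of_nat_Suc length_dbl)
  also have "\<dots> = (\<lambda>x. of_nat (2 * sum_list n) *
     oint x0 x (\<lambda>s. (\<Sum>i<d. Xt_minus x0 p r u0 (dbl n) i s) / (p s * u0 s^2)))"
    by (simp only: inner k)
  finally show ?thesis .
qed

lemma Xt_minus_dbl:
  assumes n: "length n = d" and i: "i < d" and pos: "0 < n ! i"
  shows "Xt_minus x0 p r u0 (dbl n) i = (\<lambda>x. of_nat (2 * sum_list n - 1) *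
     oint x0 x (\<lambda>s. r i s * u0 s^2 * Xt x0 p r u0 (dbl (dec n i)) s))"
proof -
  have s1: "1 \<le> sum_list n" using elem_le_sum_list[of i n] n i pos by simp
  have sj: "sum_list (dec (dbl n) i) = Suc (2 * sum_list n - 2)"
    using sum_list_dec[of i "dbl n"] n i pos s1 by simp
  have od: "odd (Suc (2 * sum_list n - 2))" using s1 by presburger
  have adm: "admissible (dec (dbl n) i)" and oi: "odd_idx (dec (dbl n) i) = i"
    using admissible_dec_dbl[of i n] n i pos by auto
  have pj: "0 < dec (dbl n) i ! i" using nth_dec_dbl_pos[of i n] n i pos by simp
  have dd: "dec (dec (dbl n) i) i = dbl (dec n i)" using dec_dec_dbl[of i n] n i pos by simp
  have sd: "sum_list (dbl (dec n i)) = 2 * sum_list n - 2"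
    using sum_list_dec[of i n] n i pos by simp
  have "Xt_minus x0 p r u0 (dbl n) i = XtL x0 p r u0 (Suc (2 * sum_list n - 2)) (dec (dbl n) i)"
    using n i pos by (simp add: Xt_minus_def Xt_def sj)
  also have "\<dots> = (\<lambda>x. of_nat (Suc (2 * sum_list n - 2)) * oint x0 x (\<lambda>s. r i s * u0 s^2 * XtL x0 p r u0 (2 * sum_list n - 2) (dbl (dec n i)) s))"
    using od adm oi pj dd by (simp del: of_nat_Suc)
  also have "\<dots> = (\<lambda>x. of_nat (2 * sum_list n - 1) *
     oint x0 x (\<lambda>s. r i s * u0 s^2 * Xt x0 p r u0 (dbl (dec n i)) s))"
    using s1 by (simp only: Xt_def sd) (simp add: Suc_diff_Suc numeral_2_eq_2 del: of_nat_Suc)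
  finally show ?thesis .
qed

lemma Xf_dbl:
  assumes n: "length n = d"
  shows "Xf x0 p r u0 (dbl n) = (\<lambda>x. of_nat (2 * sum_list n + 1) *
     oint x0 x (\<lambda>s. (\<Sum>i<d. Xf_minus x0 p r u0 (dbl n) i s) / (p s * u0 s^2)))"
proof (cases "sum_list n = 0")
  case True
  have z: "dbl n ! k = 0" if "k < length n" for k using all_zero_of_sum0[OF True that] that by simp
  have inner: "(\<Sum>i<d. Xf_minus x0 p r u0 (dbl n) i s) = (\<Sum>i<length (dbl n). 1 / of_nat (length (dbl n)))" for s
    by (rule sum.cong) (use n z in \<open>auto simp: Xf_minus_def\<close>)
  have "Xf x0 p r u0 (dbl n) = XL x0 p r u0 0 (dbl n)" unfolding Xf_def sum_list_dbl True by simp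
  also have "\<dots> = (\<lambda>x. oint x0 x (\<lambda>s. (\<Sum>i<length (dbl n). 1 / of_nat (length (dbl n))) / (p s * u0 s^2)))"
    by (simp only: XL.simps)
  finally show ?thesis unfolding True by (simp only: inner) simp
next
  case False
  obtain k where k: "2 * sum_list n = Suc k" using False by (cases "2 * sum_list n") auto
  have ev: "\<not> even (Suc k + 1)" using k by presburger
  have nz: "\<not> (\<forall>k<length (dbl n). dbl n ! k = 0)" using ex_nonzero[of n] False by auto
  have inner: "(\<Sum>i<length (dbl n). if 0 < dbl n ! i then XL x0 p r u0 k (dec (dbl n) i) s else 0)
     = (\<Sum>i<d. Xf_minus x0 p r u0 (dbl n) i s)" for s
    by (rule sum.cong) (use n k nz in \<open>auto simp: Xf_minus_def Xf_def sum_list_dec\<close>)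
  have "Xf x0 p r u0 (dbl n) = XL x0 p r u0 (Suc k) (dbl n)" by (simp add: Xf_def k)
  also have "\<dots> = (\<lambda>x. of_nat (Suc k + 1) * oint x0 x (\<lambda>s. (\<Sum>i<length (dbl n). if 0 < dbl n ! i then XL x0 p r u0 k (dec (dbl n) i) s else 0) / (p s * u0 s^2)))"
    using ev admissible_dbl[of n] by (simp del: of_nat_Suc length_dbl of_nat_add)
  also have "\<dots> = (\<lambda>x. of_nat (2 * sum_list n + 1) *
     oint x0 x (\<lambda>s. (\<Sum>i<d. Xf_minus x0 p r u0 (dbl n) i s) / (p s * u0 s^2)))"
    by (simp only: inner k)
  finally show ?thesis .
qed

lemma Xf_minus_dbl:
  assumes n: "length n = d" and i: "i < d" and pos: "0 < n ! i"
  shows "Xf_minus x0 p r u0 (dbl n) i = (\<lambda>x. of_nat (2 * sum_list n) *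
     oint x0 x (\<lambda>s. r i s * u0 s^2 * Xf x0 p r u0 (dbl (dec n i)) s))"
proof -
  have s1: "1 \<le> sum_list n" using elem_le_sum_list[of i n] n i pos by simp
  have sj: "sum_list (dec (dbl n) i) = Suc (2 * sum_list n - 2)"
    using sum_list_dec[of i "dbl n"] n i pos s1 by simp
  have ev: "even (Suc (2 * sum_list n - 2) + 1)" using s1 by presburger
  have adm: "admissible (dec (dbl n) i)" and oi: "odd_idx (dec (dbl n) i) = i"
    using admissible_dec_dbl[of i n] n i pos by auto
  have pj: "0 < dec (dbl n) i ! i" using nth_dec_dbl_pos[of i n] n i pos by simp
  have dd: "dec (dec (dbl n) i) i = dbl (dec n i)" using dec_dec_dbl[of i n] n i pos by simp
  have sd: "sum_list (dbl (dec n i)) = 2 * sum_list n - 2"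
    using sum_list_dec[of i n] n i pos by simp
  have "Xf_minus x0 p r u0 (dbl n) i = XL x0 p r u0 (Suc (2 * sum_list n - 2)) (dec (dbl n) i)"
    using n i pos by (simp add: Xf_minus_def Xf_def sj)
  also have "\<dots> = (\<lambda>x. of_nat (Suc (2 * sum_list n - 2) + 1) * oint x0 x (\<lambda>s. r i s * u0 s^2 * XL x0 p r u0 (2 * sum_list n - 2) (dbl (dec n i)) s))"
    using ev adm oi pj dd by (simp del: of_nat_Suc of_nat_add)
  also have "\<dots> = (\<lambda>x. of_nat (2 * sum_list n) *
     oint x0 x (\<lambda>s. r i s * u0 s^2 * Xf x0 p r u0 (dbl (dec n i)) s))"
    using s1 by (simp only: Xf_def sd) (simp add: Suc_diff_Suc numeral_2_eq_2 del: of_nat_Suc)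
  finally show ?thesis .
qed

end

context setting begin

definition "gg3 lam n x = (\<Sum>i<d. if 0 < n ! i then lam i * r i x * u0 x^2 * ta1 x0 p r u0 lam (dec n i) x else 0)"
definition "gg4 lam n x = (\<Sum>i<d. if 0 < n ! i then lam i * r i x * u0 x^2 * ta2 x0 p r u0 lam (dec n i) x else 0)"

lemma oint_da:
  assumes "continuous_on II \<phi>" "x \<in> II"
  shows "((\<lambda>x. a * oint x0 x \<phi>) has_vector_derivative a * \<phi> x) (at x within II)"
  using has_vector_derivative_mult_right[OF oint_deriv[OF assms(1) x0I assms(2)], of a] .

lemma oint_dc:
  assumes "continuous_on II \<phi>" "x \<in> II"
  shows "((\<lambda>x. a * oint x0 x \<phi> * b) has_vector_derivative a * \<phi> x * b) (at x within II)"
  using has_vector_derivative_mult_left[OF oint_da[OF assms, of a], of b] .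

lemma pu_nz: "x \<in> II \<Longrightarrow> p x \<noteq> 0" "x \<in> II \<Longrightarrow> u0 x \<noteq> 0"
  using pnz u0nz by auto

lemma D_ta1:
  assumes n: "length n = d" and x: "x \<in> II"
  shows "(ta1 x0 p r u0 lam n has_vector_derivative
     (if sum_list n = 0 then 0 else tb1 x0 p r u0 lam n x / (p x * u0 x^2))) (at x within II)"
proof (cases "sum_list n = 0")
  case True
  have "ta1 x0 p r u0 lam n = (\<lambda>x. lampow lam n)"
    unfolding ta1_def Xt_def sum_list_dbl True by simp
  then show ?thesis using True by simp
next
  case False
  obtain t where t: "sum_list n = Suc t" using False by (cases "sum_list n") auto
  define \<phi> where "\<phi> = (\<lambda>s. (\<Sum>i<d. Xt_minus x0 p r u0 (dbl n) i s) / (p s * u0 s^2))"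
  have \<phi>c: "continuous_on II \<phi>"
    unfolding \<phi>_def using n pnz u0nz by (intro continuous_intros Xt_minus_cont pc u0c) auto
  have eq: "ta1 x0 p r u0 lam n = (\<lambda>x. of_nat (2 * sum_list n) * oint x0 x \<phi> * (lampow lam n / fact (2 * sum_list n)))"
    using Xt_dbl[OF n] False by (simp add: fun_eq_iff ta1_def \<phi>_def)
  have D: "(ta1 x0 p r u0 lam n has_vector_derivative of_nat (2 * sum_list n) * \<phi> x * (lampow lam n / fact (2 * sum_list n))) (at x within II)"
    unfolding eq by (rule oint_dc[OF \<phi>c x])
  have "of_nat (2 * sum_list n) * \<phi> x * (lampow lam n / fact (2 * sum_list n)) = tb1 x0 p r u0 lam n x / (p x * u0 x^2)"
    using pu_nz[OF x] n unfolding tb1_def \<phi>_def t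
    by (simp add: fact_Suc field_simps del: of_nat_Suc)
  then show ?thesis using D unfolding if_not_P[OF False] by simp
qed

lemma D_ta2:
  assumes n: "length n = d" and x: "x \<in> II"
  shows "(ta2 x0 p r u0 lam n has_vector_derivative tb2 x0 p r u0 lam n x / (p x * u0 x^2)) (at x within II)"
proof -
  define \<phi> where "\<phi> = (\<lambda>s. (\<Sum>i<d. Xf_minus x0 p r u0 (dbl n) i s) / (p s * u0 s^2))"
  have \<phi>c: "continuous_on II \<phi>"
    unfolding \<phi>_def using n pnz u0nz by (intro continuous_intros Xf_minus_cont pc u0c) auto
  have eq: "ta2 x0 p r u0 lam n = (\<lambda>x. of_nat (2 * sum_list n+1) * oint x0 x \<phi> * (lampow lam n / fact (2 * sum_list n+1)))"
    using Xf_dbl[OF n] by (simp add: fun_eq_iff ta2_def \<phi>_def)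
  have D: "(ta2 x0 p r u0 lam n has_vector_derivative of_nat (2 * sum_list n+1) * \<phi> x * (lampow lam n / fact (2 * sum_list n+1))) (at x within II)"
    unfolding eq by (rule oint_dc[OF \<phi>c x])
  have "of_nat (2 * sum_list n+1) * \<phi> x * (lampow lam n / fact (2 * sum_list n+1)) = tb2 x0 p r u0 lam n x / (p x * u0 x^2)"
    using pu_nz[OF x] n unfolding tb2_def \<phi>_def
    by (simp add: fact_Suc field_simps del: of_nat_Suc)
  then show ?thesis using D by simp
qed

lemma D_tb1:
  assumes n: "length n = d" and s: "0 < sum_list n" and x: "x \<in> II"
  shows "(tb1 x0 p r u0 lam n has_vector_derivative gg3 lam n x) (at x within II)"
proof -
  obtain t where t: "sum_list n = Suc t" using s by (cases "sum_list n") auto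
  define \<psi> where "\<psi> i = (\<lambda>s. r i s * u0 s^2 * Xt x0 p r u0 (dbl (dec n i)) s)" for i
  have \<psi>c: "continuous_on II (\<psi> i)" if "i < d" for i
    unfolding \<psi>_def using n that rc by (intro continuous_intros Xt_cont u0c) auto
  have Di: "(Xt_minus x0 p r u0 (dbl n) i has_vector_derivative
      (if 0 < n ! i then of_nat (2 * sum_list n - 1) * \<psi> i x else 0)) (at x within II)"
    if i: "i < d" for i
  proof (cases "0 < n ! i")
    case True
    show ?thesis unfolding Xt_minus_dbl[OF n i True] using True
      by (simp add: \<psi>_def[symmetric] del: of_nat_diff) (rule oint_da[OF \<psi>c[OF i] x])
  next
    case False
    then have "Xt_minus x0 p r u0 (dbl n) i = (\<lambda>_. 0)" using n i by (simp add: Xt_minus_def)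
    then show ?thesis using False by simp
  qed
  have eq: "tb1 x0 p r u0 lam n = (\<lambda>x. (\<Sum>i<d. Xt_minus x0 p r u0 (dbl n) i x) * (lampow lam n / fact (2 * sum_list n - 1)))"
    using n by (simp add: fun_eq_iff tb1_def)
  have D: "(tb1 x0 p r u0 lam n has_vector_derivative
     (\<Sum>i<d. if 0 < n ! i then of_nat (2 * sum_list n - 1) * \<psi> i x else 0) * (lampow lam n / fact (2 * sum_list n - 1))) (at x within II)"
    unfolding eq by (intro has_vector_derivative_mult_left has_vector_derivative_sum Di) auto
  have "(\<Sum>i<d. if 0 < n ! i then of_nat (2 * sum_list n - 1) * \<psi> i x else 0) * (lampow lam n / fact (2 * sum_list n - 1))
      = gg3 lam n x"
    unfolding gg3_def sum_distrib_right
  proof (rule sum.cong[OF refl])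
    fix i assume "i \<in> {..<d}"
    then have i: "i < d" by simp
    show "(if 0 < n ! i then of_nat (2 * sum_list n - 1) * \<psi> i x else 0) * (lampow lam n / fact (2 * sum_list n - 1)) =
      (if 0 < n ! i then lam i * r i x * u0 x^2 * ta1 x0 p r u0 lam (dec n i) x else 0)"
    proof (cases "0 < n ! i")
      case True
      have sd: "sum_list (dec n i) = t" using sum_list_dec[of i n] n i True t by simp
      have tt: "2 * sum_list n - 1 = Suc (2 * t)" using t by simp
      show ?thesis using True lampow_dec[of i n lam] n i
        unfolding ta1_def \<psi>_def sd tt by (simp add: fact_Suc field_simps del: of_nat_Suc)
    qed simp
  qed
  then show ?thesis using D by simp
qed

lemma D_tb2:
  assumes n: "length n = d" and x: "x \<in> II"
  shows "(tb2 x0 p r u0 lam n has_vector_derivative gg4 lam n x) (at x within II)"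
proof -
  define \<psi> where "\<psi> i = (\<lambda>s. r i s * u0 s^2 * Xf x0 p r u0 (dbl (dec n i)) s)" for i
  have \<psi>c: "continuous_on II (\<psi> i)" if "i < d" for i
    unfolding \<psi>_def using n that rc by (intro continuous_intros Xf_cont u0c) auto
  have Di: "(Xf_minus x0 p r u0 (dbl n) i has_vector_derivative
      (if 0 < n ! i then of_nat (2 * sum_list n) * \<psi> i x else 0)) (at x within II)"
    if i: "i < d" for i
  proof (cases "0 < n ! i")
    case True
    show ?thesis unfolding Xf_minus_dbl[OF n i True] using True
      by (simp add: \<psi>_def[symmetric] del: of_nat_mult) (rule oint_da[OF \<psi>c[OF i] x])
  next
    case False
    then have "Xf_minus x0 p r u0 (dbl n) i = (\<lambda>_. if (\<forall>k<length (dbl n). dbl n ! k = 0) then 1 / of_nat (length (dbl n)) else 0)"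
      using n i by (simp add: Xf_minus_def fun_eq_iff)
    then show ?thesis using False by simp
  qed
  have eq: "tb2 x0 p r u0 lam n = (\<lambda>x. (\<Sum>i<d. Xf_minus x0 p r u0 (dbl n) i x) * (lampow lam n / fact (2 * sum_list n)))"
    using n by (simp add: fun_eq_iff tb2_def)
  have D: "(tb2 x0 p r u0 lam n has_vector_derivative
     (\<Sum>i<d. if 0 < n ! i then of_nat (2 * sum_list n) * \<psi> i x else 0) * (lampow lam n / fact (2 * sum_list n))) (at x within II)"
    unfolding eq by (intro has_vector_derivative_mult_left has_vector_derivative_sum Di) auto
  have "(\<Sum>i<d. if 0 < n ! i then of_nat (2 * sum_list n) * \<psi> i x else 0) * (lampow lam n / fact (2 * sum_list n))
      = gg4 lam n x"
    unfolding gg4_def sum_distrib_right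
  proof (rule sum.cong[OF refl])
    fix i assume "i \<in> {..<d}"
    then have i: "i < d" by simp
    show "(if 0 < n ! i then of_nat (2 * sum_list n) * \<psi> i x else 0) * (lampow lam n / fact (2 * sum_list n)) =
      (if 0 < n ! i then lam i * r i x * u0 x^2 * ta2 x0 p r u0 lam (dec n i) x else 0)"
    proof (cases "0 < n ! i")
      case True
      obtain t where t: "sum_list n = Suc t" using elem_le_sum_list[of i n] n i True by (cases "sum_list n") auto
      have sd: "sum_list (dec n i) = t" using sum_list_dec[of i n] n i True t by simp
      have tt: "2 * sum_list n = Suc (Suc (2 * t))" using t by simp
      show ?thesis using True lampow_dec[of i n lam] n i
        unfolding ta2_def \<psi>_def sd tt by (simp add: fact_Suc field_simps del: of_nat_Suc)
    qed simp
  qed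
  then show ?thesis using D by simp
qed

end

lemma ineq_shift:
  fixes G :: real
  assumes G: "G \<ge> 0" and s: "s \<ge> 1"
  shows "G ^ (s - 1) / fact (s - 1) \<le> (2 * (1 + G)) ^ s / fact s"
proof -
  obtain t where t: "s = Suc t" using s by (cases s) auto
  have "real (Suc t) \<le> 2 ^ Suc t" by (induction t) auto
  moreover have "G ^ t \<le> (1 + G) ^ Suc t"
  proof -
    have "G ^ t \<le> (1 + G) ^ t" using G by (intro power_mono) auto
    also have "\<dots> \<le> (1 + G) ^ Suc t" using G by (intro power_increasing) auto
    finally show ?thesis .
  qed
  ultimately have "real (Suc t) * G ^ t \<le> 2 ^ Suc t * (1 + G) ^ Suc t"
    using G by (intro mult_mono) auto
  then have "(real (Suc t) * G ^ t) / (real (Suc t) * fact t) \<le> (2 ^ Suc t * (1 + G) ^ Suc t) / (real (Suc t) * fact t)"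
    by (intro divide_right_mono) auto
  then have "G ^ t / fact t \<le> (2 ^ Suc t * (1 + G) ^ Suc t) / (real (Suc t) * fact t)"
    by (simp del: of_nat_Suc)
  moreover have "(2 * (1 + G)) ^ s / fact s = (2 ^ Suc t * (1 + G) ^ Suc t) / (real (Suc t) * fact t)"
    unfolding t power_mult_distrib fact_Suc by simp
  ultimately show ?thesis using t by simp
qed

lemma one_le_mult2: "1 \<le> a \<Longrightarrow> 1 \<le> b \<Longrightarrow> 1 \<le> a * (b::real)"
  using mult_mono[of 1 a 1 b] by simp

lemma fact_div_mono:
  fixes a :: real
  assumes "a \<ge> 0" "s \<le> m"
  shows "a / fact m \<le> a / fact s"
  using assms by (intro divide_left_mono fact_mono) auto

locale setl = setting +
  fixes lam :: "nat \<Rightarrow> complex"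
begin

abbreviation "AA \<equiv> {n::nat list. length n = d}"
definition "C0 = d * K * (x2 - x1)"
definition "E = 1 + C0"
definition "Lm = 1 + (\<Sum>i<d. norm (lam i))"
definition "GG = Lm * E^2"
definition "G2 = 2 * (1 + GG)"
definition "Cst = d * Lm * K * E"
definition "MM n = Cst * G2 ^ sum_list n / fact (sum_list n)"

lemma consts_pos: "0 \<le> C0" "1 \<le> E" "1 \<le> Lm" "0 \<le> GG" "GG \<le> G2" "1 \<le> Cst" "0 \<le> G2"
proof -
  show c0: "0 \<le> C0" using K_props(1) x12 by (simp add: C0_def)
  then show e: "1 \<le> E" by (simp add: E_def)
  show l: "1 \<le> Lm" by (simp add: Lm_def sum_nonneg)
  show g: "0 \<le> GG" using e l by (simp add: GG_def)
  then show "GG \<le> G2" by (simp add: G2_def)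
  show "0 \<le> G2" using g by (simp add: G2_def)
  have "1 \<le> real d" using d1 by simp
  then show "1 \<le> Cst" unfolding Cst_def using l K_props(1) e
    by (intro one_le_mult2) auto
qed

lemma MM_summable: "MM summable_on AA"
  unfolding MM_def
  using summable_on_cmult_right[OF summable_lists[OF consts_pos(7), of d], of Cst]
  by (simp add: mult.assoc)

lemma MM_nonneg: "0 \<le> MM n"
  using consts_pos unfolding MM_def by auto

lemma dist_le: "x \<in> II \<Longrightarrow> d * K * \<bar>x - x0\<bar> \<le> C0"
  using x0I K_props(1) unfolding C0_def by (intro mult_left_mono) auto

lemma Xt_bound: "length j = d \<Longrightarrow> x \<in> II \<Longrightarrow> norm (Xt x0 p r u0 j x) \<le> E ^ sum_list j"
proof -
  assume j: "length j = d" and x: "x \<in> II"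
  have "norm (Xt x0 p r u0 j x) \<le> (d * K * \<bar>x - x0\<bar>) ^ sum_list j"
    using XtL_props[OF j refl] x unfolding Xt_def by blast
  also have "\<dots> \<le> E ^ sum_list j"
    using dist_le[OF x] consts_pos K_props(1) by (intro power_mono) (auto simp: E_def)
  finally show ?thesis .
qed

lemma Xf_bound: "length j = d \<Longrightarrow> x \<in> II \<Longrightarrow> norm (Xf x0 p r u0 j x) \<le> E ^ Suc (sum_list j)"
proof -
  assume j: "length j = d" and x: "x \<in> II"
  have "norm (Xf x0 p r u0 j x) \<le> (d * K * \<bar>x - x0\<bar>) ^ Suc (sum_list j)"
    using XL_props[OF j refl] x unfolding Xf_def by blast
  also have "\<dots> \<le> E ^ Suc (sum_list j)"
    using dist_le[OF x] consts_pos K_props(1) by (intro power_mono) (auto simp: E_def)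
  finally show ?thesis .
qed

lemma lam_bound: "length n = d \<Longrightarrow> norm (lampow lam n) \<le> Lm ^ sum_list n"
proof -
  assume n: "length n = d"
  have "norm (lampow lam n) = (\<Prod>k<length n. norm (lam k) ^ (n ! k))"
    unfolding lampow_def by (simp add: prod_norm[symmetric] norm_power)
  also have "\<dots> \<le> (\<Prod>k<length n. Lm ^ (n ! k))"
  proof (intro prod_mono conjI)
    fix k assume "k \<in> {..<length n}"
    then have k: "k < d" using n by simp
    have "norm (lam k) \<le> (\<Sum>i<d. norm (lam i))" using k by (intro member_le_sum) auto
    then have "norm (lam k) \<le> Lm" by (simp add: Lm_def)
    then show "norm (lam k) ^ (n ! k) \<le> Lm ^ (n ! k)" by (intro power_mono) auto
  qed auto
  also have "\<dots> = Lm ^ sum_list n"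
    by (simp add: power_sum[symmetric] sum_list_sum_nth atLeast0LessThan)
  finally show ?thesis .
qed

end

context setl begin

lemma GG_le: "s \<le> m \<Longrightarrow> GG ^ s / fact m \<le> G2 ^ s / fact s"
proof -
  assume sm: "s \<le> m"
  have "GG ^ s / fact m \<le> GG ^ s / fact s" using consts_pos by (intro fact_div_mono sm) auto
  also have "\<dots> \<le> G2 ^ s / fact s" using consts_pos by (intro divide_right_mono power_mono) auto
  finally show ?thesis .
qed

lemma MM_ge: "c \<le> Cst \<Longrightarrow> 0 \<le> c \<Longrightarrow> 0 \<le> y \<Longrightarrow> y \<le> G2 ^ sum_list n / fact (sum_list n) \<Longrightarrow> c * y \<le> MM n"
  unfolding MM_def using consts_pos
  by (metis (no_types, opaque_lifting) mult_mono order_trans times_divide_eq_right)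

lemma Cst_ge: "1 \<le> Cst" "E \<le> Cst" "d \<le> Cst" "d * K \<le> Cst" "d * Lm * K \<le> Cst"
proof -
  have d: "1 \<le> real d" using d1 by simp
  have K: "1 \<le> K" by (rule K_props(1))
  note c = consts_pos
  show "1 \<le> Cst" by (rule c(6))
  have dLK: "1 \<le> d * Lm * K" using d K c by (intro one_le_mult2) auto
  show "d * Lm * K \<le> Cst" unfolding Cst_def using dLK c mult_left_mono[of 1 E "d * Lm * K"] by simp
  show "E \<le> Cst" unfolding Cst_def using dLK c mult_right_mono[of 1 "d * Lm * K" E] by simp
  have "d * K \<le> d * Lm * K" using c d K mult_left_mono[of 1 Lm "d"] by (intro mult_right_mono) auto
  then show dK: "d * K \<le> Cst" using \<open>d * Lm * K \<le> Cst\<close> by simp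
  have "real d \<le> real d * K" using mult_left_mono[of 1 K "real d"] K by simp
  then show "d \<le> Cst" using dK by simp
qed

lemma GE: "E ^ (2 * s) * Lm ^ s = GG ^ s"
  unfolding GG_def power_mult power_mult_distrib by (simp add: mult.commute)

lemma ta1_bound0: "length n = d \<Longrightarrow> x \<in> II \<Longrightarrow> norm (ta1 x0 p r u0 lam n x) \<le> GG ^ sum_list n / fact (2 * sum_list n)"
proof -
  assume n: "length n = d" and x: "x \<in> II"
  have "norm (ta1 x0 p r u0 lam n x) = norm (Xt x0 p r u0 (dbl n) x) * norm (lampow lam n) / fact (2 * sum_list n)"
    by (simp add: ta1_def norm_mult norm_divide)
  also have "\<dots> \<le> E ^ (2 * sum_list n) * Lm ^ sum_list n / fact (2 * sum_list n)"
    using Xt_bound[of "dbl n" x] lam_bound[OF n] n x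
    by (intro divide_right_mono mult_mono) auto
  finally show ?thesis by (simp add: GE)
qed

lemma ta2_bound0: "length n = d \<Longrightarrow> x \<in> II \<Longrightarrow> norm (ta2 x0 p r u0 lam n x) \<le> E * (GG ^ sum_list n / fact (2 * sum_list n + 1))"
proof -
  assume n: "length n = d" and x: "x \<in> II"
  have "norm (ta2 x0 p r u0 lam n x) = norm (Xf x0 p r u0 (dbl n) x) * norm (lampow lam n) / fact (2 * sum_list n + 1)"
    by (simp only: ta2_def norm_mult norm_divide norm_fact)
  also have "\<dots> \<le> E ^ Suc (2 * sum_list n) * Lm ^ sum_list n / fact (2 * sum_list n + 1)"
    using Xf_bound[of "dbl n" x] lam_bound[OF n] n x consts_pos
    by (intro divide_right_mono mult_mono) auto
  also have "\<dots> = E * (GG ^ sum_list n / fact (2 * sum_list n + 1))"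
    by (simp add: GE[symmetric] mult_ac)
  finally show ?thesis .
qed

lemma G2y: "0 \<le> G2 ^ m / fact m"
  using consts_pos by simp

lemma MM_ge2: "c \<le> Cst \<Longrightarrow> 0 \<le> c \<Longrightarrow> norm (z::complex) \<le> c * (G2 ^ sum_list n / fact (sum_list n)) \<Longrightarrow> norm z \<le> MM n"
  using MM_ge[OF _ _ G2y order_refl, of c n] by linarith

lemma ta1_bound: "n \<in> AA \<Longrightarrow> x \<in> II \<Longrightarrow> norm (ta1 x0 p r u0 lam n x) \<le> MM n"
proof -
  assume n: "n \<in> AA" and x: "x \<in> II"
  have "norm (ta1 x0 p r u0 lam n x) \<le> GG ^ sum_list n / fact (2 * sum_list n)"
    using ta1_bound0[of n x] n x by simp
  also have "\<dots> \<le> 1 * (G2 ^ sum_list n / fact (sum_list n))" using GG_le[of "sum_list n" "2 * sum_list n"] by simp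
  finally have h: "norm (ta1 x0 p r u0 lam n x) \<le> 1 * (G2 ^ sum_list n / fact (sum_list n))" .
  show ?thesis by (rule MM_ge2[OF Cst_ge(1) _ h]) simp
qed

lemma ta2_bound: "n \<in> AA \<Longrightarrow> x \<in> II \<Longrightarrow> norm (ta2 x0 p r u0 lam n x) \<le> MM n"
proof -
  assume n: "n \<in> AA" and x: "x \<in> II"
  have "norm (ta2 x0 p r u0 lam n x) \<le> E * (GG ^ sum_list n / fact (2 * sum_list n + 1))"
    using ta2_bound0[of n x] n x by simp
  also have "\<dots> \<le> E * (G2 ^ sum_list n / fact (sum_list n))"
    using GG_le[of "sum_list n" "2 * sum_list n + 1"] consts_pos by (intro mult_left_mono) auto
  finally have h: "norm (ta2 x0 p r u0 lam n x) \<le> E * (G2 ^ sum_list n / fact (sum_list n))" .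
  show ?thesis by (rule MM_ge2[OF Cst_ge(2) _ h]) (use consts_pos in simp)
qed

lemma Xt_minus_bound: "length n = d \<Longrightarrow> i < d \<Longrightarrow> x \<in> II \<Longrightarrow> norm (Xt_minus x0 p r u0 (dbl n) i x) \<le> E ^ (2 * sum_list n)"
proof -
  assume n: "length n = d" and i: "i < d" and x: "x \<in> II"
  show ?thesis
  proof (cases "0 < dbl n ! i")
    case True
    have "norm (Xt_minus x0 p r u0 (dbl n) i x) \<le> E ^ sum_list (dec (dbl n) i)"
      using True Xt_bound[of "dec (dbl n) i" x] n x by (simp add: Xt_minus_def)
    also have "\<dots> \<le> E ^ (2 * sum_list n)"
      using sum_list_dec[of i "dbl n"] True n i consts_pos by (intro power_increasing) auto
    finally show ?thesis .
  next
    case False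
    then show ?thesis using consts_pos by (simp add: Xt_minus_def)
  qed
qed

lemma Xf_minus_bound: "length n = d \<Longrightarrow> i < d \<Longrightarrow> x \<in> II \<Longrightarrow> norm (Xf_minus x0 p r u0 (dbl n) i x) \<le> E ^ (2 * sum_list n)"
proof -
  assume n: "length n = d" and i: "i < d" and x: "x \<in> II"
  show ?thesis
  proof (cases "0 < dbl n ! i")
    case True
    have s: "1 \<le> sum_list n" using elem_le_sum_list[of i n] True n i by simp
    have "norm (Xf_minus x0 p r u0 (dbl n) i x) \<le> E ^ Suc (sum_list (dec (dbl n) i))"
      using True Xf_bound[of "dec (dbl n) i" x] n x by (simp add: Xf_minus_def)
    also have "Suc (sum_list (dec (dbl n) i)) = 2 * sum_list n"
      using sum_list_dec[of i "dbl n"] True n i s by simp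
    finally show ?thesis .
  next
    case False
    have a: "norm (1 / of_nat (length (dbl n)) :: complex) \<le> 1" using n d1 by (simp add: norm_divide)
    have b: "1 \<le> E ^ (2 * sum_list n)" using consts_pos by simp
    have c: "norm (1 / of_nat (length (dbl n)) :: complex) \<le> E ^ (2 * sum_list n)" using order_trans[OF a b] .
    have e: "0 \<le> E ^ (2 * sum_list n)" using b by linarith
    show ?thesis using False c e unfolding Xf_minus_def by (simp only: if_False if_not_P) (auto simp del: length_dbl)
  qed
qed

lemma tb1_bound0: "length n = d \<Longrightarrow> 0 < sum_list n \<Longrightarrow> x \<in> II \<Longrightarrow>
   norm (tb1 x0 p r u0 lam n x) \<le> d * (G2 ^ sum_list n / fact (sum_list n))"
proof -
  assume n: "length n = d" and s: "0 < sum_list n" and x: "x \<in> II"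
  have "norm (tb1 x0 p r u0 lam n x) = norm (\<Sum>i<d. Xt_minus x0 p r u0 (dbl n) i x) * norm (lampow lam n) / fact (2 * sum_list n - 1)"
    using n by (simp add: tb1_def norm_mult norm_divide)
  also have "\<dots> \<le> (d * E ^ (2 * sum_list n)) * Lm ^ sum_list n / fact (2 * sum_list n - 1)"
    using Xt_minus_bound[OF n _ x] lam_bound[OF n] consts_pos
    by (intro divide_right_mono mult_mono norm_sum_le_const) auto
  also have "\<dots> = d * (GG ^ sum_list n / fact (2 * sum_list n - 1))"
    by (simp add: GE[symmetric] mult_ac)
  also have "\<dots> \<le> d * (G2 ^ sum_list n / fact (sum_list n))"
    using GG_le[of "sum_list n" "2 * sum_list n - 1"] s by (intro mult_left_mono) auto
  finally show ?thesis .
qed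

lemma tb2_bound0: "length n = d \<Longrightarrow> x \<in> II \<Longrightarrow>
   norm (tb2 x0 p r u0 lam n x) \<le> d * (G2 ^ sum_list n / fact (sum_list n))"
proof -
  assume n: "length n = d" and x: "x \<in> II"
  have "norm (tb2 x0 p r u0 lam n x) = norm (\<Sum>i<d. Xf_minus x0 p r u0 (dbl n) i x) * norm (lampow lam n) / fact (2 * sum_list n)"
    using n by (simp add: tb2_def norm_mult norm_divide)
  also have "\<dots> \<le> (d * E ^ (2 * sum_list n)) * Lm ^ sum_list n / fact (2 * sum_list n)"
    using Xf_minus_bound[OF n _ x] lam_bound[OF n] consts_pos
    by (intro divide_right_mono mult_mono norm_sum_le_const) auto
  also have "\<dots> = d * (GG ^ sum_list n / fact (2 * sum_list n))"
    by (simp add: GE[symmetric] mult_ac)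
  also have "\<dots> \<le> d * (G2 ^ sum_list n / fact (sum_list n))"
    using GG_le[of "sum_list n" "2 * sum_list n"] by (intro mult_left_mono) auto
  finally show ?thesis .
qed

lemma tb1_bound: "n \<in> AA - {replicate d 0} \<Longrightarrow> x \<in> II \<Longrightarrow> norm (tb1 x0 p r u0 lam n x) \<le> MM n"
proof -
  assume n: "n \<in> AA - {replicate d 0}" and x: "x \<in> II"
  have s: "0 < sum_list n"
  proof (rule ccontr)
    assume "\<not> 0 < sum_list n"
    then have "\<forall>k\<in>set n. k = 0" by simp
    then have "n = replicate d 0" using n by (simp add: replicate_length_same[symmetric] set_replicate_conv_if) (metis replicate_length_same)
    with n show False by simp
  qed
  have "norm (tb1 x0 p r u0 lam n x) \<le> d * (G2 ^ sum_list n / fact (sum_list n))"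
    using tb1_bound0[of n x] n s x by simp
  note h = this
  show ?thesis by (rule MM_ge2[OF Cst_ge(3) _ h]) simp
qed

lemma tb2_bound: "n \<in> AA \<Longrightarrow> x \<in> II \<Longrightarrow> norm (tb2 x0 p r u0 lam n x) \<le> MM n"
proof -
  assume n: "n \<in> AA" and x: "x \<in> II"
  have "norm (tb2 x0 p r u0 lam n x) \<le> d * (G2 ^ sum_list n / fact (sum_list n))"
    using tb2_bound0[of n x] n x by simp
  note h = this
  show ?thesis by (rule MM_ge2[OF Cst_ge(3) _ h]) simp
qed

end

lemma zero_list: "length n = d \<Longrightarrow> sum_list n = 0 \<Longrightarrow> n = replicate d (0::nat)"
proof -
  assume n: "length n = d" "sum_list n = 0"
  then have "\<forall>k\<in>set n. k = 0" by simp
  then show ?thesis using n by (metis replicate_length_same)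
qed

lemma pos_list: "length n = d \<Longrightarrow> n \<noteq> replicate d 0 \<Longrightarrow> 0 < sum_list (n::nat list)"
  using zero_list by blast

context setl begin

definition "g1 n x = (if sum_list n = 0 then 0 else tb1 x0 p r u0 lam n x / (p x * u0 x^2))"
definition "g2 n x = tb2 x0 p r u0 lam n x / (p x * u0 x^2)"

lemma g1_bound: "n \<in> AA \<Longrightarrow> x \<in> II \<Longrightarrow> norm (g1 n x) \<le> MM n"
proof (cases "sum_list n = 0")
  case True
  then show "norm (g1 n x) \<le> MM n" using MM_nonneg by (simp add: g1_def)
next
  case False
  assume n: "n \<in> AA" and x: "x \<in> II"
  have "norm (g1 n x) = norm (tb1 x0 p r u0 lam n x) * norm (1 / (p x * u0 x^2))"
    unfolding g1_def if_not_P[OF False] by (simp add: norm_divide)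
  also have "\<dots> \<le> (d * (G2 ^ sum_list n / fact (sum_list n))) * K"
    using n False by (intro mult_mono[OF tb1_bound0[OF _ iffD2[OF gr0_conv_Suc, OF not0_implies_Suc[OF False]] x] K_props(2)[OF x] mult_nonneg_nonneg[OF of_nat_0_le_iff[of d] G2y[of "sum_list n"]] norm_ge_zero]) auto
  finally have h: "norm (g1 n x) \<le> (d * K) * (G2 ^ sum_list n / fact (sum_list n))" by (simp add: mult_ac)
  show "norm (g1 n x) \<le> MM n" by (rule MM_ge2[OF Cst_ge(4) _ h]) (use K_props(1) in simp)
qed

lemma g2_bound: "n \<in> AA \<Longrightarrow> x \<in> II \<Longrightarrow> norm (g2 n x) \<le> MM n"
proof -
  assume n: "n \<in> AA" and x: "x \<in> II"
  have "norm (g2 n x) = norm (tb2 x0 p r u0 lam n x) * norm (1 / (p x * u0 x^2))"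
    by (simp add: g2_def norm_divide)
  also have "\<dots> \<le> (d * (G2 ^ sum_list n / fact (sum_list n))) * K"
    using n by (intro mult_mono[OF tb2_bound0[OF _ x] K_props(2)[OF x] mult_nonneg_nonneg[OF of_nat_0_le_iff[of d] G2y[of "sum_list n"]] norm_ge_zero]) auto
  finally have h: "norm (g2 n x) \<le> (d * K) * (G2 ^ sum_list n / fact (sum_list n))" by (simp add: mult_ac)
  show "norm (g2 n x) \<le> MM n" by (rule MM_ge2[OF Cst_ge(4) _ h]) (use K_props(1) in simp)
qed

lemma lam_le: "i < d \<Longrightarrow> norm (lam i) \<le> Lm"
proof -
  assume "i < d"
  then have "norm (lam i) \<le> (\<Sum>i<d. norm (lam i))" by (intro member_le_sum) auto
  then show ?thesis by (simp add: Lm_def)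
qed

lemma gg3_bound: "n \<in> AA \<Longrightarrow> x \<in> II \<Longrightarrow> norm (gg3 lam n x) \<le> MM n"
proof -
  assume n: "n \<in> AA" and x: "x \<in> II"
  have "norm (gg3 lam n x) \<le> d * (Lm * K * (G2 ^ sum_list n / fact (sum_list n)))"
    unfolding gg3_def
  proof (rule norm_sum_le_const)
    fix i assume i: "i < d"
    show "norm (if 0 < n ! i then lam i * r i x * u0 x^2 * ta1 x0 p r u0 lam (dec n i) x else 0)
      \<le> Lm * K * (G2 ^ sum_list n / fact (sum_list n))"
    proof (cases "0 < n ! i")
      case True
      have s: "1 \<le> sum_list n" using elem_le_sum_list[of i n] True n i by simp
      have sd: "sum_list (dec n i) = sum_list n - 1" using sum_list_dec[of i n] True n i by simp
      have "norm (ta1 x0 p r u0 lam (dec n i) x) \<le> GG ^ (sum_list n - 1) / fact (2 * (sum_list n - 1))"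
        using ta1_bound0[of "dec n i" x] n x sd by simp
      also have "\<dots> \<le> GG ^ (sum_list n - 1) / fact (sum_list n - 1)"
        using consts_pos by (intro fact_div_mono) auto
      also have "\<dots> \<le> G2 ^ sum_list n / fact (sum_list n)"
        using ineq_shift[of GG "sum_list n"] consts_pos s by (simp add: G2_def)
      finally have t: "norm (ta1 x0 p r u0 lam (dec n i) x) \<le> G2 ^ sum_list n / fact (sum_list n)" .
      have "norm (lam i * r i x * u0 x^2 * ta1 x0 p r u0 lam (dec n i) x) =
          norm (lam i) * (norm (r i x * u0 x^2) * norm (ta1 x0 p r u0 lam (dec n i) x))"
        by (simp add: norm_mult mult_ac)
      also have "\<dots> \<le> Lm * (K * (G2 ^ sum_list n / fact (sum_list n)))"
        using lam_le[OF i] K_props(3)[OF i x] t consts_pos K_props(1)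
        by (intro mult_mono) auto
      finally show ?thesis using True by (simp add: mult_ac)
    qed (use consts_pos K_props(1) in simp)
  qed
  then have h: "norm (gg3 lam n x) \<le> (d * Lm * K) * (G2 ^ sum_list n / fact (sum_list n))"
    by (simp add: mult_ac)
  show ?thesis by (rule MM_ge2[OF Cst_ge(5) _ h]) (use K_props(1) consts_pos in simp)
qed

lemma gg4_bound: "n \<in> AA \<Longrightarrow> x \<in> II \<Longrightarrow> norm (gg4 lam n x) \<le> MM n"
proof -
  assume n: "n \<in> AA" and x: "x \<in> II"
  have "norm (gg4 lam n x) \<le> d * (Lm * K * (E * (G2 ^ sum_list n / fact (sum_list n))))"
    unfolding gg4_def
  proof (rule norm_sum_le_const)
    fix i assume i: "i < d"
    show "norm (if 0 < n ! i then lam i * r i x * u0 x^2 * ta2 x0 p r u0 lam (dec n i) x else 0)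
      \<le> Lm * K * (E * (G2 ^ sum_list n / fact (sum_list n)))"
    proof (cases "0 < n ! i")
      case True
      have s: "1 \<le> sum_list n" using elem_le_sum_list[of i n] True n i by simp
      have sd: "sum_list (dec n i) = sum_list n - 1" using sum_list_dec[of i n] True n i by simp
      have "norm (ta2 x0 p r u0 lam (dec n i) x) \<le> E * (GG ^ (sum_list n - 1) / fact (2 * (sum_list n - 1) + 1))"
        using ta2_bound0[of "dec n i" x] n x sd by simp
      also have "\<dots> \<le> E * (GG ^ (sum_list n - 1) / fact (sum_list n - 1))"
        using consts_pos by (intro mult_left_mono fact_div_mono) auto
      also have "\<dots> \<le> E * (G2 ^ sum_list n / fact (sum_list n))"
        using ineq_shift[of GG "sum_list n"] consts_pos s by (intro mult_left_mono) (auto simp: G2_def)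
      finally have t: "norm (ta2 x0 p r u0 lam (dec n i) x) \<le> E * (G2 ^ sum_list n / fact (sum_list n))" .
      have "norm (lam i * r i x * u0 x^2 * ta2 x0 p r u0 lam (dec n i) x) =
          norm (lam i) * (norm (r i x * u0 x^2) * norm (ta2 x0 p r u0 lam (dec n i) x))"
        by (simp add: norm_mult mult_ac)
      also have "\<dots> \<le> Lm * (K * (E * (G2 ^ sum_list n / fact (sum_list n))))"
        using lam_le[OF i] K_props(3)[OF i x] t consts_pos K_props(1)
        by (intro mult_mono) auto
      finally show ?thesis using True by (simp add: mult_ac)
    qed (use consts_pos K_props(1) in simp)
  qed
  then have h: "norm (gg4 lam n x) \<le> Cst * (G2 ^ sum_list n / fact (sum_list n))"
    by (simp add: mult_ac Cst_def)
  show ?thesis by (rule MM_ge2[OF order_refl _ h]) (use Cst_ge in simp)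
qed

lemma MM_sub: "MM summable_on (AA - {replicate d 0})"
  by (rule summable_on_subset[OF MM_summable]) auto

lemma unif:
  fixes f :: "nat list \<Rightarrow> real \<Rightarrow> complex"
  assumes "B \<subseteq> AA" "\<And>n x. n \<in> B \<Longrightarrow> x \<in> II \<Longrightarrow> norm (f n x) \<le> MM n"
  shows "uniform_limit II (\<lambda>F x. \<Sum>n\<in>F. f n x) (\<lambda>x. \<Sum>\<^sub>\<infinity>n\<in>B. f n x) (finite_subsets_at_top B)"
  by (rule mtest[OF summable_on_subset[OF MM_summable assms(1)] assms(2)]) (use MM_nonneg in auto)

lemma summ:
  fixes f :: "nat list \<Rightarrow> complex"
  assumes "B \<subseteq> AA" "\<And>n. n \<in> B \<Longrightarrow> norm (f n) \<le> MM n"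
  shows "f summable_on B"
  by (rule summ_cmp[OF summable_on_subset[OF MM_summable assms(1)] assms(2)])

lemma U_ta1: "uniform_limit II (\<lambda>F x. \<Sum>n\<in>F. ta1 x0 p r u0 lam n x) (\<lambda>x. \<Sum>\<^sub>\<infinity>n\<in>AA. ta1 x0 p r u0 lam n x) (finite_subsets_at_top AA)"
  by (rule unif[OF _ ta1_bound]) auto
lemma U_ta2: "uniform_limit II (\<lambda>F x. \<Sum>n\<in>F. ta2 x0 p r u0 lam n x) (\<lambda>x. \<Sum>\<^sub>\<infinity>n\<in>AA. ta2 x0 p r u0 lam n x) (finite_subsets_at_top AA)"
  by (rule unif[OF _ ta2_bound]) auto
lemma U_tb1: "uniform_limit II (\<lambda>F x. \<Sum>n\<in>F. tb1 x0 p r u0 lam n x) (\<lambda>x. \<Sum>\<^sub>\<infinity>n\<in>AA - {replicate d 0}. tb1 x0 p r u0 lam n x) (finite_subsets_at_top (AA - {replicate d 0}))"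
  by (rule unif[OF _ tb1_bound]) auto
lemma U_tb2: "uniform_limit II (\<lambda>F x. \<Sum>n\<in>F. tb2 x0 p r u0 lam n x) (\<lambda>x. \<Sum>\<^sub>\<infinity>n\<in>AA. tb2 x0 p r u0 lam n x) (finite_subsets_at_top AA)"
  by (rule unif[OF _ tb2_bound]) auto

end

context setl begin

abbreviation "zz \<equiv> replicate d (0::nat)"

definition "S1 x = (\<Sum>\<^sub>\<infinity>n\<in>AA. ta1 x0 p r u0 lam n x)"
definition "T1 x = (\<Sum>\<^sub>\<infinity>n\<in>AA - {zz}. tb1 x0 p r u0 lam n x)"
definition "S2 x = (\<Sum>\<^sub>\<infinity>n\<in>AA. ta2 x0 p r u0 lam n x)"
definition "T2 x = (\<Sum>\<^sub>\<infinity>n\<in>AA. tb2 x0 p r u0 lam n x)"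
definition "ww x = (\<Sum>i<d. lam i * r i x)"

lemma ta1_cont: "n \<in> AA \<Longrightarrow> continuous_on II (ta1 x0 p r u0 lam n)"
  by (rule deriv_cont) (rule D_ta1, auto)
lemma ta2_cont: "n \<in> AA \<Longrightarrow> continuous_on II (ta2 x0 p r u0 lam n)"
  by (rule deriv_cont) (rule D_ta2, auto)
lemma tb1_cont: "n \<in> AA - {zz} \<Longrightarrow> continuous_on II (tb1 x0 p r u0 lam n)"
  by (rule deriv_cont) (rule D_tb1, auto intro: pos_list)
lemma tb2_cont: "n \<in> AA \<Longrightarrow> continuous_on II (tb2 x0 p r u0 lam n)"
  by (rule deriv_cont) (rule D_tb2, auto)

lemma zz_in: "zz \<in> AA" by simp
lemma sum_zz: "sum_list zz = 0" by simp

lemma x12le: "x1 \<le> x2" using x12 by simp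

lemma S1_deriv:
  assumes x: "x \<in> II"
  shows "(S1 has_vector_derivative T1 x / (p x * u0 x^2)) (at x within II)"
proof -
  have D: "(S1 has_vector_derivative (\<Sum>\<^sub>\<infinity>n\<in>AA. g1 n x)) (at x within II)"
  proof (rule termwise_deriv[where f="\<lambda>n. ta1 x0 p r u0 lam n" and g=g1 and A=AA and
        G="\<lambda>x. \<Sum>\<^sub>\<infinity>n\<in>AA. g1 n x", OF x12le])
    fix n assume n: "n \<in> AA"
    show "continuous_on II (g1 n)"
    proof (cases "sum_list n = 0")
      case True then show ?thesis by (simp add: g1_def continuous_on_const)
    next
      case False
      have "n \<noteq> zz"
      proof
        assume "n = zz" then have "sum_list n = 0" by simp
        with False show False by simp
      qed
      then have "n \<in> AA - {zz}" using n by auto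
      then show ?thesis unfolding g1_def if_not_P[OF False] using pnz u0nz
        by (intro continuous_intros tb1_cont pc u0c) auto
    qed
    fix y assume "y \<in> II"
    then show "(ta1 x0 p r u0 lam n has_vector_derivative g1 n y) (at y within II)"
      using D_ta1[of n y] n by (simp add: g1_def)
  next
    show "uniform_limit II (\<lambda>F x. \<Sum>n\<in>F. g1 n x) (\<lambda>x. \<Sum>\<^sub>\<infinity>n\<in>AA. g1 n x) (finite_subsets_at_top AA)"
      by (rule unif[OF _ g1_bound]) auto
  next
    fix y assume "y \<in> II"
    then show "((\<lambda>F. \<Sum>n\<in>F. ta1 x0 p r u0 lam n y) \<longlongrightarrow> S1 y) (finite_subsets_at_top AA)"
      unfolding S1_def by (rule tendsto_uniform_limitI[OF U_ta1])
  qed (rule x)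
  have "(\<Sum>\<^sub>\<infinity>n\<in>AA. g1 n x) = (\<Sum>\<^sub>\<infinity>n\<in>AA - {zz}. tb1 x0 p r u0 lam n x * (1 / (p x * u0 x^2)))"
  proof (rule infsum_cong_neutral)
    fix y assume "y \<in> AA - (AA - {zz})"
    then have "y = zz" by simp
    then show "g1 y x = 0" by (simp add: g1_def)
  next
    fix y assume y: "y \<in> AA \<inter> (AA - {zz})"
    then have yl: "length y = d" "y \<noteq> zz" by auto
    have "0 < sum_list y" by (rule pos_list[OF yl])
    then have "sum_list y \<noteq> 0" by linarith
    then show "g1 y x = tb1 x0 p r u0 lam y x * (1 / (p x * u0 x^2))" unfolding g1_def if_not_P[OF \<open>sum_list y \<noteq> 0\<close>] by simp
  qed auto
  also have "\<dots> = T1 x * (1 / (p x * u0 x^2))"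
    unfolding T1_def by (rule infsum_cmult_left) (rule summ[OF _ tb1_bound[OF _ x]], auto)
  finally show ?thesis using D by simp
qed

lemma S2_deriv:
  assumes x: "x \<in> II"
  shows "(S2 has_vector_derivative T2 x / (p x * u0 x^2)) (at x within II)"
proof -
  have D: "(S2 has_vector_derivative (\<Sum>\<^sub>\<infinity>n\<in>AA. g2 n x)) (at x within II)"
  proof (rule termwise_deriv[where f="\<lambda>n. ta2 x0 p r u0 lam n" and g=g2 and A=AA and
        G="\<lambda>x. \<Sum>\<^sub>\<infinity>n\<in>AA. g2 n x", OF x12le])
    fix n assume n: "n \<in> AA"
    show "continuous_on II (g2 n)"
      unfolding g2_def using pnz u0nz n by (intro continuous_intros tb2_cont pc u0c) auto
    fix y assume "y \<in> II"
    then show "(ta2 x0 p r u0 lam n has_vector_derivative g2 n y) (at y within II)"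
      using D_ta2[of n y] n by (simp add: g2_def)
  next
    show "uniform_limit II (\<lambda>F x. \<Sum>n\<in>F. g2 n x) (\<lambda>x. \<Sum>\<^sub>\<infinity>n\<in>AA. g2 n x) (finite_subsets_at_top AA)"
      by (rule unif[OF _ g2_bound]) auto
  next
    fix y assume "y \<in> II"
    then show "((\<lambda>F. \<Sum>n\<in>F. ta2 x0 p r u0 lam n y) \<longlongrightarrow> S2 y) (finite_subsets_at_top AA)"
      unfolding S2_def by (rule tendsto_uniform_limitI[OF U_ta2])
  qed (rule x)
  have "(\<Sum>\<^sub>\<infinity>n\<in>AA. g2 n x) = (\<Sum>\<^sub>\<infinity>n\<in>AA. tb2 x0 p r u0 lam n x * (1 / (p x * u0 x^2)))"
    by (rule infsum_cong) (auto simp: g2_def)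
  also have "\<dots> = T2 x * (1 / (p x * u0 x^2))"
    unfolding T2_def by (rule infsum_cmult_left) (rule summ[OF _ tb2_bound[OF _ x]], auto)
  finally show ?thesis using D by simp
qed

lemma gg3_cont: "n \<in> AA \<Longrightarrow> continuous_on II (gg3 lam n)"
  unfolding gg3_def[abs_def] using rc
  by (intro continuous_on_sum cont_if_const continuous_intros u0c ta1_cont) auto

lemma gg4_cont: "n \<in> AA \<Longrightarrow> continuous_on II (gg4 lam n)"
  unfolding gg4_def[abs_def] using rc
  by (intro continuous_on_sum cont_if_const continuous_intros u0c ta2_cont) auto

lemma gg3_zz: "gg3 lam zz x = 0"
  by (simp add: gg3_def)

lemma T1_deriv:
  assumes x: "x \<in> II"
  shows "(T1 has_vector_derivative ww x * u0 x^2 * S1 x) (at x within II)"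
proof -
  have D: "(T1 has_vector_derivative (\<Sum>\<^sub>\<infinity>n\<in>AA - {zz}. gg3 lam n x)) (at x within II)"
  proof (rule termwise_deriv[where f="\<lambda>n. tb1 x0 p r u0 lam n" and g="gg3 lam" and A="AA - {zz}" and
        G="\<lambda>x. \<Sum>\<^sub>\<infinity>n\<in>AA - {zz}. gg3 lam n x", OF x12le])
    fix n assume n: "n \<in> AA - {zz}"
    show "continuous_on II (gg3 lam n)" using n by (intro gg3_cont) auto
    fix y assume "y \<in> II"
    then show "(tb1 x0 p r u0 lam n has_vector_derivative gg3 lam n y) (at y within II)"
      using D_tb1[of n y] n pos_list by auto
  next
    show "uniform_limit II (\<lambda>F x. \<Sum>n\<in>F. gg3 lam n x) (\<lambda>x. \<Sum>\<^sub>\<infinity>n\<in>AA - {zz}. gg3 lam n x) (finite_subsets_at_top (AA - {zz}))"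
      by (rule unif[OF _ gg3_bound]) auto
  next
    fix y assume "y \<in> II"
    then show "((\<lambda>F. \<Sum>n\<in>F. tb1 x0 p r u0 lam n y) \<longlongrightarrow> T1 y) (finite_subsets_at_top (AA - {zz}))"
      unfolding T1_def by (rule tendsto_uniform_limitI[OF U_tb1])
  qed (rule x)
  have "(\<Sum>\<^sub>\<infinity>n\<in>AA - {zz}. gg3 lam n x) = (\<Sum>\<^sub>\<infinity>n\<in>AA. gg3 lam n x)"
  proof (rule infsum_cong_neutral)
    fix y assume "y \<in> AA - (AA - {zz})"
    then have "y = zz" by simp
    then show "gg3 lam y x = 0" using gg3_zz by simp
  qed auto
  also have "\<dots> = (\<Sum>i<d. (lam i * r i x * u0 x^2) * S1 x)"
  proof (rule infsumI)
    have sm: "(\<lambda>m. ta1 x0 p r u0 lam m x) summable_on AA"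
      by (rule summ[OF _ ta1_bound[OF _ x]]) auto
    show "((\<lambda>n. gg3 lam n x) has_sum (\<Sum>i<d. lam i * r i x * u0 x^2 * S1 x)) AA"
      using has_sum_shift_sum[OF sm, of "\<lambda>i. lam i * r i x * u0 x^2"]
      unfolding gg3_def S1_def by simp
  qed
  also have "\<dots> = ww x * u0 x^2 * S1 x"
    unfolding ww_def by (simp add: sum_distrib_right)
  finally show ?thesis using D by simp
qed

lemma T2_deriv:
  assumes x: "x \<in> II"
  shows "(T2 has_vector_derivative ww x * u0 x^2 * S2 x) (at x within II)"
proof -
  have D: "(T2 has_vector_derivative (\<Sum>\<^sub>\<infinity>n\<in>AA. gg4 lam n x)) (at x within II)"
  proof (rule termwise_deriv[where f="\<lambda>n. tb2 x0 p r u0 lam n" and g="gg4 lam" and A="AA" and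
        G="\<lambda>x. \<Sum>\<^sub>\<infinity>n\<in>AA. gg4 lam n x", OF x12le])
    fix n assume n: "n \<in> AA"
    show "continuous_on II (gg4 lam n)" using n by (intro gg4_cont) auto
    fix y assume "y \<in> II"
    then show "(tb2 x0 p r u0 lam n has_vector_derivative gg4 lam n y) (at y within II)"
      using D_tb2[of n y] n by auto
  next
    show "uniform_limit II (\<lambda>F x. \<Sum>n\<in>F. gg4 lam n x) (\<lambda>x. \<Sum>\<^sub>\<infinity>n\<in>AA. gg4 lam n x) (finite_subsets_at_top AA)"
      by (rule unif[OF _ gg4_bound]) auto
  next
    fix y assume "y \<in> II"
    then show "((\<lambda>F. \<Sum>n\<in>F. tb2 x0 p r u0 lam n y) \<longlongrightarrow> T2 y) (finite_subsets_at_top AA)"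
      unfolding T2_def by (rule tendsto_uniform_limitI[OF U_tb2])
  qed (rule x)
  have "(\<Sum>\<^sub>\<infinity>n\<in>AA. gg4 lam n x) = (\<Sum>i<d. (lam i * r i x * u0 x^2) * S2 x)"
  proof (rule infsumI)
    have sm: "(\<lambda>m. ta2 x0 p r u0 lam m x) summable_on AA"
      by (rule summ[OF _ ta2_bound[OF _ x]]) auto
    show "((\<lambda>n. gg4 lam n x) has_sum (\<Sum>i<d. lam i * r i x * u0 x^2 * S2 x)) AA"
      using has_sum_shift_sum[OF sm, of "\<lambda>i. lam i * r i x * u0 x^2"]
      unfolding gg4_def S2_def by simp
  qed
  also have "\<dots> = ww x * u0 x^2 * S2 x"
    unfolding ww_def by (simp add: sum_distrib_right)
  finally show ?thesis using D by simp
qed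

end

context setl begin

lemma lampow_zz: "lampow lam zz = 1"
  by (simp add: lampow_def)

lemma ta1_x0: "n \<in> AA \<Longrightarrow> ta1 x0 p r u0 lam n x0 = (if n = zz then 1 else 0)"
proof (cases "n = zz")
  case True
  then show ?thesis by (simp add: ta1_def Xt_def lampow_zz sum_zz)
next
  case False
  assume n: "n \<in> AA"
  have s: "0 < sum_list n" using pos_list[of n] n False by simp
  show ?thesis using False Xt_dbl[of n, OF _ s] n by (simp add: ta1_def)
qed

lemma ta2_x0: "n \<in> AA \<Longrightarrow> ta2 x0 p r u0 lam n x0 = 0"
  using Xf_dbl[of n] by (simp add: ta2_def)

lemma tb1_x0: "n \<in> AA \<Longrightarrow> tb1 x0 p r u0 lam n x0 = 0"
proof -
  assume n: "n \<in> AA"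
  have "Xt_minus x0 p r u0 (dbl n) i x0 = 0" if i: "i < d" for i
  proof (cases "0 < n ! i")
    case True
    show ?thesis using Xt_minus_dbl[of n i, OF _ i True] n by simp
  next
    case False
    then show ?thesis using n i by (simp add: Xt_minus_def)
  qed
  then show ?thesis using n by (simp add: tb1_def)
qed

lemma tb2_x0: "n \<in> AA \<Longrightarrow> tb2 x0 p r u0 lam n x0 = (if n = zz then 1 else 0)"
proof (cases "n = zz")
  case True
  have "(\<Sum>i<d. Xf_minus x0 p r u0 (dbl zz) i x0) = (\<Sum>i<d. 1 / of_nat d)"
    by (rule sum.cong) (auto simp: Xf_minus_def dbl_def)
  also have "\<dots> = 1" using d1 by simp
  finally show ?thesis using True by (simp add: tb2_def lampow_zz sum_zz)
next
  case False
  assume n: "n \<in> AA"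
  have s: "0 < sum_list n" using pos_list[of n] n False by simp
  obtain k where k: "k < length n" "n ! k \<noteq> 0" using ex_nonzero[OF s] by blast
  have "Xf_minus x0 p r u0 (dbl n) i x0 = 0" if i: "i < d" for i
  proof (cases "0 < n ! i")
    case True
    show ?thesis using Xf_minus_dbl[of n i, OF _ i True] n by simp
  next
    case False
    have "\<not> (\<forall>k<length (dbl n). dbl n ! k = 0)" using k by auto
    then show ?thesis using False n i by (simp add: Xf_minus_def)
  qed
  then show ?thesis using n False by (simp add: tb2_def)
qed

lemma S1_x0: "S1 x0 = 1"
proof -
  have "S1 x0 = (\<Sum>\<^sub>\<infinity>n\<in>{zz}. ta1 x0 p r u0 lam n x0)"
    unfolding S1_def by (rule infsum_cong_neutral) (auto simp: ta1_x0)
  also have "\<dots> = 1" using ta1_x0[OF zz_in] by simp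
  finally show ?thesis .
qed

lemma T2_x0: "T2 x0 = 1"
proof -
  have "T2 x0 = (\<Sum>\<^sub>\<infinity>n\<in>{zz}. tb2 x0 p r u0 lam n x0)"
    unfolding T2_def by (rule infsum_cong_neutral) (auto simp: tb2_x0)
  also have "\<dots> = 1" using tb2_x0[OF zz_in] by simp
  finally show ?thesis .
qed

lemma S2_x0: "S2 x0 = 0"
  unfolding S2_def by (rule infsum_0) (simp add: ta2_x0)

lemma T1_x0: "T1 x0 = 0"
  unfolding T1_def by (rule infsum_0) (simp add: tb1_x0)

lemma inv_deriv:
  assumes x: "x \<in> II"
  shows "((\<lambda>t. inverse (u0 t)) has_vector_derivative u0' x * (- (inverse (u0 x) ^ Suc (Suc 0)))) (at x within II)"
proof -
  have "(inverse has_field_derivative - (inverse (u0 x) ^ Suc (Suc 0))) (at (u0 x) within u0 ` II)"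
    using u0nz x by (intro DERIV_inverse) auto
  from field_vector_diff_chain_within[OF u0d[OF x] this] show ?thesis by (simp add: comp_def)
qed

lemma ode_gen:
  assumes SD: "\<And>x. x \<in> II \<Longrightarrow> (S has_vector_derivative T x / (p x * u0 x^2)) (at x within II)"
    and TD: "\<And>x. x \<in> II \<Longrightarrow> (T has_vector_derivative ww x * u0 x^2 * S x) (at x within II)"
  shows "ode_sol II p q ww (\<lambda>x. u0 x * S x) (\<lambda>x. u0' x / u0 x * (u0 x * S x) + T x / (p x * u0 x))"
  unfolding ode_sol_def
proof (intro conjI ballI)
  fix x assume x: "x \<in> II"
  have nz: "p x \<noteq> 0" "u0 x \<noteq> 0" using pu_nz[OF x] by auto
  have "((\<lambda>x. u0 x * S x) has_vector_derivative u0 x * (T x / (p x * u0 x^2)) + u0' x * S x) (at x within II)"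
    by (rule has_vector_derivative_mult[OF u0d[OF x] SD[OF x]])
  moreover have "u0 x * (T x / (p x * u0 x^2)) + u0' x * S x = u0' x / u0 x * (u0 x * S x) + T x / (p x * u0 x)"
    using nz by (simp add: field_simps power2_eq_square)
  ultimately show "((\<lambda>x. u0 x * S x) has_vector_derivative u0' x / u0 x * (u0 x * S x) + T x / (p x * u0 x)) (at x within II)"
    by simp
  define F where "F = (\<lambda>t. (p t * u0' t) * S t + T t * inverse (u0 t))"
  have "(F has_vector_derivative ((p x * u0' x) * (T x / (p x * u0 x^2)) + (- q x * u0 x) * S x)
      + (T x * (u0' x * (- (inverse (u0 x) ^ Suc (Suc 0)))) + (ww x * u0 x^2 * S x) * inverse (u0 x))) (at x within II)"
    unfolding F_def
    by (intro has_vector_derivative_add has_vector_derivative_mult pu0d[OF x] SD[OF x] TD[OF x] inv_deriv[OF x])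
  moreover have "((p x * u0' x) * (T x / (p x * u0 x^2)) + (- q x * u0 x) * S x)
      + (T x * (u0' x * (- (inverse (u0 x) ^ Suc (Suc 0)))) + (ww x * u0 x^2 * S x) * inverse (u0 x))
      = (ww x - q x) * (u0 x * S x)"
    using nz by (simp add: field_simps power2_eq_square)
  ultimately have DF: "(F has_vector_derivative (ww x - q x) * (u0 x * S x)) (at x within II)" by simp
  show "((\<lambda>t. p t * (u0' t / u0 t * (u0 t * S t) + T t / (p t * u0 t))) has_vector_derivative
      (ww x - q x) * (u0 x * S x)) (at x within II)"
  proof (rule has_vector_derivative_transform[OF x _ DF])
    fix t assume t: "t \<in> II"
    have "p t \<noteq> 0" "u0 t \<noteq> 0" using pu_nz[OF t] by auto
    then show "p t * (u0' t / u0 t * (u0 t * S t) + T t / (p t * u0 t)) = F t"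
      by (simp add: F_def field_simps)
  qed
qed

lemma ode1: "ode_sol II p q ww (\<lambda>x. u0 x * S1 x) (\<lambda>x. u0' x / u0 x * (u0 x * S1 x) + T1 x / (p x * u0 x))"
  by (rule ode_gen[OF S1_deriv T1_deriv])

lemma ode2: "ode_sol II p q ww (\<lambda>x. u0 x * S2 x) (\<lambda>x. u0' x / u0 x * (u0 x * S2 x) + T2 x / (p x * u0 x))"
  by (rule ode_gen[OF S2_deriv T2_deriv])

lemma indep: "\<forall>c1 c2 :: complex. (\<forall>x\<in>II. c1 * (u0 x * S1 x) + c2 * (u0 x * S2 x) = 0) \<longrightarrow> c1 = 0 \<and> c2 = 0"
proof (intro allI impI)
  fix c1 c2 :: complex
  assume H: "\<forall>x\<in>II. c1 * (u0 x * S1 x) + c2 * (u0 x * S2 x) = 0"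
  have nz: "p x0 \<noteq> 0" "u0 x0 \<noteq> 0" using pu_nz[OF x0I] by auto
  have "c1 * (u0 x0 * S1 x0) + c2 * (u0 x0 * S2 x0) = 0" using H x0I by blast
  then have "c1 * u0 x0 = 0" using S1_x0 S2_x0 by simp
  then have c1: "c1 = 0" using nz by simp
  have c2: "c2 = 0"
  proof (rule ccontr)
    assume c2: "c2 \<noteq> 0"
    have z: "u0 x * S2 x = 0" if "x \<in> II" for x using H c1 c2 that by auto
    have D1: "((\<lambda>x. u0 x * S2 x) has_vector_derivative u0' x0 / u0 x0 * (u0 x0 * S2 x0) + T2 x0 / (p x0 * u0 x0)) (at x0 within II)"
      using ode2 x0I unfolding ode_sol_def by blast
    have D2: "((\<lambda>x. u0 x * S2 x) has_vector_derivative 0) (at x0 within II)"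
      by (rule has_vector_derivative_transform[OF x0I _ has_vector_derivative_const[of "0::complex"]]) (rule z)
    have "u0' x0 / u0 x0 * (u0 x0 * S2 x0) + T2 x0 / (p x0 * u0 x0) = 0"
      using vector_derivative_unique_within_closed_interval[OF x12 _ D1[unfolded cbox_interval[symmetric]] D2[unfolded cbox_interval[symmetric]]] x0I
      by (simp add: cbox_interval)
    then show False using S2_x0 T2_x0 nz by simp
  qed
  show "c1 = 0 \<and> c2 = 0" using c1 c2 by simp
qed

end

theorem mainTheorem1:
  fixes d :: nat and x0 x1 x2 :: real
    and p q u0 u0' :: "real \<Rightarrow> complex" and r :: "nat \<Rightarrow> real \<Rightarrow> complex"
    and lam :: "nat \<Rightarrow> complex"
  assumes "d \<ge> 1" and "x1 < x2" and "x0 \<in> {x1..x2}"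
    and "continuous_on {x1..x2} p" and "continuous_on {x1..x2} q"
    and "\<forall>i<d. continuous_on {x1..x2} (r i)"
    and "\<exists>p'. continuous_on {x1..x2} p' \<and>
            (\<forall>x\<in>{x1..x2}. (p has_vector_derivative p' x) (at x within {x1..x2}))"
    and "\<forall>x\<in>{x1..x2}. p x \<noteq> 0"
    and "ode_sol {x1..x2} p q (\<lambda>_. 0) u0 u0'"
    and "\<forall>x\<in>{x1..x2}. u0 x \<noteq> 0"
  defines "u1 \<equiv> \<lambda>x. u0 x * (\<Sum>\<^sub>\<infinity>n\<in>{n. length n = d}. ta1 x0 p r u0 lam n x)"
    and "u2 \<equiv> \<lambda>x. u0 x * (\<Sum>\<^sub>\<infinity>n\<in>{n. length n = d}. ta2 x0 p r u0 lam n x)"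
    and "u1' \<equiv> \<lambda>x. u0' x / u0 x * (u0 x * (\<Sum>\<^sub>\<infinity>n\<in>{n. length n = d}. ta1 x0 p r u0 lam n x))
                 + (\<Sum>\<^sub>\<infinity>n\<in>{n. length n = d} - {replicate d 0}. tb1 x0 p r u0 lam n x) / (p x * u0 x)"
    and "u2' \<equiv> \<lambda>x. u0' x / u0 x * (u0 x * (\<Sum>\<^sub>\<infinity>n\<in>{n. length n = d}. ta2 x0 p r u0 lam n x))
                 + (\<Sum>\<^sub>\<infinity>n\<in>{n. length n = d}. tb2 x0 p r u0 lam n x) / (p x * u0 x)"
    and "w \<equiv> \<lambda>x. \<Sum>i<d. lam i * r i x"
  shows "uniform_limit {x1..x2} (\<lambda>F x. \<Sum>n\<in>F. ta1 x0 p r u0 lam n x)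
           (\<lambda>x. \<Sum>\<^sub>\<infinity>n\<in>{n. length n = d}. ta1 x0 p r u0 lam n x)
           (finite_subsets_at_top {n. length n = d})
       \<and> uniform_limit {x1..x2} (\<lambda>F x. \<Sum>n\<in>F. ta2 x0 p r u0 lam n x)
           (\<lambda>x. \<Sum>\<^sub>\<infinity>n\<in>{n. length n = d}. ta2 x0 p r u0 lam n x)
           (finite_subsets_at_top {n. length n = d})
       \<and> uniform_limit {x1..x2} (\<lambda>F x. \<Sum>n\<in>F. tb1 x0 p r u0 lam n x)
           (\<lambda>x. \<Sum>\<^sub>\<infinity>n\<in>{n. length n = d} - {replicate d 0}. tb1 x0 p r u0 lam n x)
           (finite_subsets_at_top ({n. length n = d} - {replicate d 0}))
       \<and> uniform_limit {x1..x2} (\<lambda>F x. \<Sum>n\<in>F. tb2 x0 p r u0 lam n x)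
           (\<lambda>x. \<Sum>\<^sub>\<infinity>n\<in>{n. length n = d}. tb2 x0 p r u0 lam n x)
           (finite_subsets_at_top {n. length n = d})
       \<and> ode_sol {x1..x2} p q w u1 u1'
       \<and> ode_sol {x1..x2} p q w u2 u2'
       \<and> (\<forall>c1 c2 :: complex. (\<forall>x\<in>{x1..x2}. c1 * u1 x + c2 * u2 x = 0) \<longrightarrow> c1 = 0 \<and> c2 = 0)
       \<and> u1 x0 = u0 x0 \<and> u1' x0 = u0' x0
       \<and> u2 x0 = 0 \<and> u2' x0 = 1 / (p x0 * u0 x0)"
proof -
  interpret S: setl d x0 x1 x2 p q u0 u0' r lam
    by unfold_locales (use assms(1-6,8-10) in auto)
  have U1: "uniform_limit {x1..x2} (\<lambda>F x. \<Sum>n\<in>F. ta1 x0 p r u0 lam n x)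
           (\<lambda>x. \<Sum>\<^sub>\<infinity>n\<in>{n. length n = d}. ta1 x0 p r u0 lam n x)
           (finite_subsets_at_top {n. length n = d})" by (rule S.U_ta1)
  have U2: "uniform_limit {x1..x2} (\<lambda>F x. \<Sum>n\<in>F. ta2 x0 p r u0 lam n x)
           (\<lambda>x. \<Sum>\<^sub>\<infinity>n\<in>{n. length n = d}. ta2 x0 p r u0 lam n x)
           (finite_subsets_at_top {n. length n = d})" by (rule S.U_ta2)
  have U3: "uniform_limit {x1..x2} (\<lambda>F x. \<Sum>n\<in>F. tb1 x0 p r u0 lam n x)
           (\<lambda>x. \<Sum>\<^sub>\<infinity>n\<in>{n. length n = d} - {replicate d 0}. tb1 x0 p r u0 lam n x)
           (finite_subsets_at_top ({n. length n = d} - {replicate d 0}))" by (rule S.U_tb1)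
  have U4: "uniform_limit {x1..x2} (\<lambda>F x. \<Sum>n\<in>F. tb2 x0 p r u0 lam n x)
           (\<lambda>x. \<Sum>\<^sub>\<infinity>n\<in>{n. length n = d}. tb2 x0 p r u0 lam n x)
           (finite_subsets_at_top {n. length n = d})" by (rule S.U_tb2)
  have wE: "w = S.ww" unfolding w_def S.ww_def[abs_def] by simp
  have u1E: "u1 = (\<lambda>x. u0 x * S.S1 x)" unfolding u1_def S.S1_def[abs_def] by simp
  have u2E: "u2 = (\<lambda>x. u0 x * S.S2 x)" unfolding u2_def S.S2_def[abs_def] by simp
  have u1'E: "u1' = (\<lambda>x. u0' x / u0 x * (u0 x * S.S1 x) + S.T1 x / (p x * u0 x))"
    unfolding u1'_def S.S1_def[abs_def] S.T1_def[abs_def] by simp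
  have u2'E: "u2' = (\<lambda>x. u0' x / u0 x * (u0 x * S.S2 x) + S.T2 x / (p x * u0 x))"
    unfolding u2'_def S.S2_def[abs_def] S.T2_def[abs_def] by simp
  have O1: "ode_sol {x1..x2} p q w u1 u1'" unfolding wE u1E u1'E by (rule S.ode1)
  have O2: "ode_sol {x1..x2} p q w u2 u2'" unfolding wE u2E u2'E by (rule S.ode2)
  have LI: "\<forall>c1 c2 :: complex. (\<forall>x\<in>{x1..x2}. c1 * u1 x + c2 * u2 x = 0) \<longrightarrow> c1 = 0 \<and> c2 = 0"
    unfolding u1E u2E by (rule S.indep)
  have nz: "u0 x0 \<noteq> 0" using assms(3,10) by auto
  have I1: "u1 x0 = u0 x0" unfolding u1E using S.S1_x0 by simp
  have I2: "u1' x0 = u0' x0" unfolding u1'E using S.S1_x0 S.T1_x0 nz by simp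
  have I3: "u2 x0 = 0" unfolding u2E using S.S2_x0 by simp
  have I4: "u2' x0 = 1 / (p x0 * u0 x0)" unfolding u2'E using S.S2_x0 S.T2_x0 by simp
  show ?thesis by (intro conjI U1 U2 U3 U4 O1 O2 LI I1 I2 I3 I4)
qed


end
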